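(* Let $n\ge4$, $j\ge0$, $b\in B$, $(\mu_i)_{i=1}^n\in\mathbb Z^n$ and $\mu=(-\mu_1-\mu_2)\Lambda_0+(\mu_1-\mu_2)\Lambda_1+\cdots+(\mu_{n-1}-\mu_n)\Lambda_{n-1}+(\mu_{n-1}+\mu_n)\Lambda_n$. Let $s=n$ if $b\in\{\bar n,\dots,\bar1\}$ and $s=1$ if $b\in\{1,\dots,n\}$. Then $$g_j(b,\mu)=\sum_{\gamma}q^{\frac12\sum_{i\in B}\gamma_i(\gamma_i-1)-\gamma_s\gamma_{\bar s}+\sum_{i\in B}H(b\otimes i)\gamma_i}\begin{bmatrix}j\\ \gamma\end{bmatrix}_q,$$ the sum over $\gamma=(\gamma_i)_{i\in B}\in\mathbb Z_{\ge0}^{2n}$ with $\gamma_i-\gamma_{\bar i}=\mu_i$ for $i=1,\dots,n$ and $\sum_{i\in B}\gamma_i=j$.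
   Context: Affine algebra $D^{(1)}_n$ with fundamental weights $\Lambda_0,\dots,\Lambda_n$, $P_{cl}=\bigoplus\mathbb Z\Lambda_i$. $B=\{1,\dots,n,\bar n,\dots,\bar1\}$ with partial order $1\prec\cdots\prec n-1\prec n,\bar n\prec\overline{n-1}\prec\cdots\prec\bar1$ ($n$ and $\bar n$ incomparable). Weights: $wt(\bar b)=-wt(b)$, $wt(b)=\Lambda_b-\Lambda_{b-1}$ for $b\ne2,n-1$ (so $wt(1)=\Lambda_1-\Lambda_0$, $wt(n)=\Lambda_n-\Lambda_{n-1}$), $wt(2)=\Lambda_2-\Lambda_1-\Lambda_0$, $wt(n-1)=\Lambda_n+\Lambda_{n-1}-\Lambda_{n-2}$. Energy function: $H(b\otimes b')=0$ if $b\prec b'$, $=1$ if $b\succeq b'$, except $H(n\otimes\bar n)=H(\bar n\otimes n)=0$ and $H(1\otimes\bar1)=-1$. For $j\ge0$, $b\in B$, $\mu\in P_{cl}$: $g_j(b,\mu)=\sum q^{\sum_{i=1}^j iH(b_{i+1}\otimes b_i)}$, summed over $(b_j,\dots,b_1)\in B^j$ with $wt(b_j)+\cdots+wt(b_1)=\mu$, where $b_{j+1}=b$. For an integer vector $\gamma=(\gamma_b)_{b\in B}$: $\begin{bmatrix}j\\ \gamma\end{bmatrix}_q=(q)_j/\prod_{b\in B}(q)_{\gamma_b}$ if $\sum_b\gamma_b=j$ and all $\gamma_b\ge0$, and $0$ otherwise; $(q)_m=\prod_{i=1}^m(1-q^i)$. *)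

theory Defs
  imports "HOL-Computational_Algebra.Formal_Laurent_Series" "HOL-Library.Function_Algebras"
begin

text \<open>Elements of the crystal B = {1,...,n, bar n, ..., bar 1}: U i stands for i, Bar i for bar i.\<close>
datatype bel = U nat | Bar nat

definition Bset :: "nat \<Rightarrow> bel set" where
  "Bset n = U ` {1..n} \<union> Bar ` {1..n}"

text \<open>Weights in P_cl, represented as coefficient functions k \<mapsto> coefficient of Lambda_k.\<close>
definition Lam :: "nat \<Rightarrow> (nat \<Rightarrow> int)" where
  "Lam k = (\<lambda>i. if i = k then 1 else 0)"

definition wtU :: "nat \<Rightarrow> nat \<Rightarrow> (nat \<Rightarrow> int)" where
  "wtU n b = (if b = 2 then Lam 2 - Lam 1 - Lam 0
              else if b = n - 1 then Lam n + Lam (n - 1) - Lam (n - 2)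
              else Lam b - Lam (b - 1))"

fun wt :: "nat \<Rightarrow> bel \<Rightarrow> (nat \<Rightarrow> int)" where
  "wt n (U b) = wtU n b"
| "wt n (Bar b) = - wtU n b"

text \<open>Position in the chain 1 < ... < n-1 < {n, bar n} < bar(n-1) < ... < bar 1.\<close>
fun rk :: "nat \<Rightarrow> bel \<Rightarrow> nat" where
  "rk n (U i) = i"
| "rk n (Bar i) = 2 * n + 1 - i"

definition prec :: "nat \<Rightarrow> bel \<Rightarrow> bel \<Rightarrow> bool" where
  "prec n b b' \<longleftrightarrow> rk n b < rk n b' \<and> \<not> ((b = U n \<and> b' = Bar n) \<or> (b = Bar n \<and> b' = U n))"

definition H :: "nat \<Rightarrow> bel \<Rightarrow> bel \<Rightarrow> int" where
  "H n b b' = (if (b = U n \<and> b' = Bar n) \<or> (b = Bar n \<and> b' = U n) then 0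
               else if b = U 1 \<and> b' = Bar 1 then -1
               else if prec n b b' then 0
               else 1)"

text \<open>q as the formal variable of Laurent series; q^e for integer e.\<close>
abbreviation qpow :: "int \<Rightarrow> rat fls" where
  "qpow e \<equiv> fls_X_intpow e"

definition qpoch :: "nat \<Rightarrow> rat fls" where
  "qpoch m = (\<Prod>i = 1..m. 1 - qpow (int i))"

definition qmultinom :: "nat \<Rightarrow> nat \<Rightarrow> (bel \<Rightarrow> int) \<Rightarrow> rat fls" where
  "qmultinom n j \<gamma> = (if (\<Sum>b\<in>Bset n. \<gamma> b) = int j \<and> (\<forall>b\<in>Bset n. \<gamma> b \<ge> 0)
      then qpoch j / (\<Prod>b\<in>Bset n. qpoch (nat (\<gamma> b))) else 0)"

text \<open>A path (b_j,...,b_1) is a list xs of length j with xs ! (i-1) = b_i; b_{j+1} = b.\<close>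
definition pathel :: "bel \<Rightarrow> bel list \<Rightarrow> nat \<Rightarrow> bel" where
  "pathel b xs i = (if i = length xs + 1 then b else xs ! (i - 1))"

definition gfun :: "nat \<Rightarrow> nat \<Rightarrow> bel \<Rightarrow> (nat \<Rightarrow> int) \<Rightarrow> rat fls" where
  "gfun n j b \<mu> = (\<Sum>xs\<in>{xs. length xs = j \<and> set xs \<subseteq> Bset n \<and> (\<Sum>x\<leftarrow>xs. wt n x) = \<mu>}.
      qpow (\<Sum>i = 1..j. int i * H n (pathel b xs (i + 1)) (pathel b xs i)))"

definition muwt :: "nat \<Rightarrow> (nat \<Rightarrow> int) \<Rightarrow> (nat \<Rightarrow> int)" where
  "muwt n m = (\<lambda>k. if k = 0 then - m 1 - m 2
                   else if k < n then m k - m (k + 1)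
                   else if k = n then m (n - 1) + m n
                   else 0)"

end

theory Submission
  imports Defs
begin



definition Q :: "int \<Rightarrow> rat fls" where "Q i = qpow i"

lemma Q_add: "Q (a + b) = Q a * Q b"
  unfolding Q_def by (simp add: fls_X_intpow_times_fls_X_intpow)

lemma Q_0[simp]: "Q 0 = 1" by (simp add: Q_def)

lemma Q_nz[simp]: "Q a \<noteq> 0" by (simp add: Q_def)

lemma Q_eq_1_iff: "Q a = 1 \<longleftrightarrow> a = 0"
proof
  assume "Q a = 1"
  then have "fls_subdegree (qpow a) = fls_subdegree (1::rat fls)" by (simp add: Q_def)
  then show "a = 0" by simp
qed simp


lemma qpoch_0[simp]: "qpoch 0 = 1" by (simp add: qpoch_def)

lemma qpoch_Suc: "qpoch (Suc k) = qpoch k * (1 - Q (int (Suc k)))"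
  by (simp add: qpoch_def Q_def)

lemma one_minus_Q_nz: "i \<noteq> 0 \<Longrightarrow> 1 - Q i \<noteq> 0"
  using Q_eq_1_iff[of i] by auto

lemma qpoch_nz[simp]: "qpoch k \<noteq> 0"
proof (induction k)
  case 0 then show ?case by simp
next
  case (Suc k)
  have "1 - Q (int (Suc k)) \<noteq> 0" by (rule one_minus_Q_nz) simp
  then show ?case using Suc by (simp add: qpoch_Suc)
qed

definition cw :: "nat \<Rightarrow> rat fls" where
  "cw a = Q (int (a * (a - 1) div 2)) / qpoch a"

lemma cw_0[simp]: "cw 0 = 1" by (simp add: cw_def)

lemma tri_Suc: "Suc a * (Suc a - 1) div 2 = a * (a - 1) div 2 + a"
proof -
  have "Suc a * a = a * (a - 1) + 2 * a" by (cases a) (auto simp: algebra_simps)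
  moreover have "even (a * (a - 1))" by (cases a) auto
  ultimately show ?thesis by auto
qed

lemma cw_Suc: "cw (Suc a) * (1 - Q (int (Suc a))) = Q (int a) * cw a"
proof -
  have nz: "1 - Q (int (Suc a)) \<noteq> 0" by (rule one_minus_Q_nz) simp
  have "cw (Suc a) * (1 - Q (int (Suc a))) = Q (int (a * (a - 1) div 2 + a)) / qpoch a"
    unfolding cw_def tri_Suc qpoch_Suc using nz by (simp add: field_simps)
  also have "\<dots> = Q (int a) * cw a"
    by (simp add: cw_def Q_add add.commute)
  finally show ?thesis .
qed

lemma Bset_mem: "x \<in> Bset n \<longleftrightarrow> (case x of U i \<Rightarrow> 1 \<le> i \<and> i \<le> n | Bar i \<Rightarrow> 1 \<le> i \<and> i \<le> n)"
  by (cases x) (auto simp: Bset_def)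

lemma U_in_Bset[simp]: "U i \<in> Bset n \<longleftrightarrow> 1 \<le> i \<and> i \<le> n"
  and Bar_in_Bset[simp]: "Bar i \<in> Bset n \<longleftrightarrow> 1 \<le> i \<and> i \<le> n"
  by (auto simp: Bset_mem)

lemma finite_Bset[simp]: "finite (Bset n)" by (simp add: Bset_def)

lemma sum_Bset: "(\<Sum>x\<in>Bset n. f x) = (\<Sum>i=1..n. f (U i) + f (Bar i))"
proof -
  have "(\<Sum>x\<in>Bset n. f x) = (\<Sum>x\<in>U ` {1..n}. f x) + (\<Sum>x\<in>Bar ` {1..n}. f x)"
    unfolding Bset_def by (rule sum.union_disjoint) auto
  also have "\<dots> = (\<Sum>i=1..n. f (U i)) + (\<Sum>i=1..n. f (Bar i))"
    by (simp add: sum.reindex inj_on_def)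
  finally show ?thesis by (simp add: sum.distrib)
qed

lemma prod_Bset: "(\<Prod>x\<in>Bset n. f x) = (\<Prod>i=1..n. f (U i) * f (Bar i))"
proof -
  have "(\<Prod>x\<in>Bset n. f x) = (\<Prod>x\<in>U ` {1..n}. f x) * (\<Prod>x\<in>Bar ` {1..n}. f x)"
    unfolding Bset_def by (rule prod.union_disjoint) auto
  also have "\<dots> = (\<Prod>i=1..n. f (U i)) * (\<Prod>i=1..n. f (Bar i))"
    by (simp add: prod.reindex inj_on_def)
  finally show ?thesis by (simp add: prod.distrib)
qed




definition Gam :: "nat \<Rightarrow> (nat \<Rightarrow> int) \<Rightarrow> nat \<Rightarrow> (bel \<Rightarrow> int) set" where
  "Gam n m j = {\<gamma>. (\<forall>x\<in>Bset n. \<gamma> x \<ge> 0) \<and> (\<forall>x. x \<notin> Bset n \<longrightarrow> \<gamma> x = 0)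
           \<and> (\<forall>i\<in>{1..n}. \<gamma> (U i) - \<gamma> (Bar i) = m i) \<and> (\<Sum>x\<in>Bset n. \<gamma> x) = int j}"

definition lf :: "(bel \<Rightarrow> int) \<Rightarrow> (bel \<Rightarrow> int) \<Rightarrow> bel \<Rightarrow> rat fls" where
  "lf g \<gamma> x = cw (nat (\<gamma> x)) * Q (g x * \<gamma> x)"

definition Ph :: "nat \<Rightarrow> (bel \<Rightarrow> int) \<Rightarrow> (nat \<Rightarrow> int) \<Rightarrow> nat \<Rightarrow> rat fls" where
  "Ph n g m j = (\<Sum>\<gamma>\<in>Gam n m j. \<Prod>x\<in>Bset n. lf g \<gamma> x)"

fun dl :: "bel \<Rightarrow> nat \<Rightarrow> int" where
  "dl (U i) = (\<lambda>k. if k = i then 1 else 0)"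
| "dl (Bar i) = (\<lambda>k. if k = i then -1 else 0)"

lemma Gam_le: assumes "\<gamma> \<in> Gam n m j" "x \<in> Bset n" shows "\<gamma> x \<le> int j"
proof -
  have "\<gamma> x \<le> (\<Sum>x\<in>Bset n. \<gamma> x)"
    by (rule member_le_sum) (use assms in \<open>auto simp: Gam_def\<close>)
  then show ?thesis using assms by (simp add: Gam_def)
qed

lemma finite_Gam[simp]: "finite (Gam n m j)"
proof -
  have "Gam n m j \<subseteq> {f. \<forall>x. (x \<in> Bset n \<longrightarrow> f x \<in> {0..int j}) \<and> (x \<notin> Bset n \<longrightarrow> f x = 0)}"
    using Gam_le by (auto simp: Gam_def)
  moreover have "finite {f. \<forall>x. (x \<in> Bset n \<longrightarrow> f x \<in> {0..int j}) \<and> (x \<notin> Bset n \<longrightarrow> f x = (0::int))}"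
    by (rule finite_set_of_finite_funs) auto
  ultimately show ?thesis by (rule finite_subset)
qed

lemma prod_lf_upd:
  assumes "c \<in> Bset n"
  shows "(\<Prod>x\<in>Bset n. lf (g(c := g c + 1)) \<gamma> x) = (\<Prod>x\<in>Bset n. lf g \<gamma> x) * Q (\<gamma> c)"
proof -
  have "(\<Prod>x\<in>Bset n. lf (g(c := g c + 1)) \<gamma> x) = lf (g(c := g c + 1)) \<gamma> c * (\<Prod>x\<in>Bset n - {c}. lf (g(c := g c + 1)) \<gamma> x)"
    using assms by (simp add: prod.remove)
  also have "(\<Prod>x\<in>Bset n - {c}. lf (g(c := g c + 1)) \<gamma> x) = (\<Prod>x\<in>Bset n - {c}. lf g \<gamma> x)"
    by (rule prod.cong) (auto simp: lf_def)
  also have "lf (g(c := g c + 1)) \<gamma> c = lf g \<gamma> c * Q (\<gamma> c)"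
    by (simp add: lf_def distrib_right Q_add)
  also have "lf g \<gamma> c * Q (\<gamma> c) * (\<Prod>x\<in>Bset n - {c}. lf g \<gamma> x) = (\<Prod>x\<in>Bset n. lf g \<gamma> x) * Q (\<gamma> c)"
    using assms by (simp add: prod.remove mult_ac)
  finally show ?thesis .
qed

lemma sum_upd:
  assumes c: "c \<in> Bset n"
  shows "(\<Sum>x\<in>Bset n. (\<gamma>(c := v)) x) = (\<Sum>x\<in>Bset n. \<gamma> x) - \<gamma> c + (v::int)"
proof -
  have "(\<Sum>x\<in>Bset n. (\<gamma>(c := v)) x) = v + (\<Sum>x\<in>Bset n - {c}. (\<gamma>(c := v)) x)"
    using c by (simp add: sum.remove)
  also have "(\<Sum>x\<in>Bset n - {c}. (\<gamma>(c := v)) x) = (\<Sum>x\<in>Bset n - {c}. \<gamma> x)"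
    by (rule sum.cong) auto
  also have "(\<Sum>x\<in>Bset n. \<gamma> x) = \<gamma> c + (\<Sum>x\<in>Bset n - {c}. \<gamma> x)"
    using c by (simp add: sum.remove)
  ultimately show ?thesis by simp
qed

lemma Gam_upd:
  assumes c: "c \<in> Bset n"
  shows "(\<lambda>\<gamma>. \<gamma>(c := \<gamma> c + 1)) ` Gam n (m - dl c) j = {\<gamma> \<in> Gam n m (Suc j). \<gamma> c \<noteq> 0}"
proof (intro equalityI subsetI)
  fix \<gamma> assume "\<gamma> \<in> (\<lambda>\<gamma>. \<gamma>(c := \<gamma> c + 1)) ` Gam n (m - dl c) j"
  then obtain \<gamma>' where g': "\<gamma>' \<in> Gam n (m - dl c) j" and ge: "\<gamma> = \<gamma>'(c := \<gamma>' c + 1)" by auto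
  have p: "\<gamma>' c \<ge> 0" using g' c by (auto simp: Gam_def)
  have s: "(\<Sum>x\<in>Bset n. \<gamma> x) = int (Suc j)"
    unfolding ge sum_upd[OF c] using g' by (simp add: Gam_def)
  have d: "\<forall>i\<in>{1..n}. \<gamma> (U i) - \<gamma> (Bar i) = m i"
  proof
    fix i assume i: "i \<in> {1..n}"
    then have "\<gamma>' (U i) - \<gamma>' (Bar i) = (m - dl c) i" using g' by (auto simp: Gam_def)
    then show "\<gamma> (U i) - \<gamma> (Bar i) = m i" using c unfolding ge by (cases c) auto
  qed
  have "\<forall>x\<in>Bset n. \<gamma> x \<ge> 0" "\<forall>x. x \<notin> Bset n \<longrightarrow> \<gamma> x = 0" "\<gamma> c \<noteq> 0"
    using g' c p unfolding ge Gam_def by auto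
  then show "\<gamma> \<in> {\<gamma> \<in> Gam n m (Suc j). \<gamma> c \<noteq> 0}"
    using s d by (simp add: Gam_def)
next
  fix \<gamma> assume "\<gamma> \<in> {\<gamma> \<in> Gam n m (Suc j). \<gamma> c \<noteq> 0}"
  then have g: "\<gamma> \<in> Gam n m (Suc j)" and nz: "\<gamma> c \<noteq> 0" by auto
  have pos: "\<gamma> c > 0" using g nz c by (force simp: Gam_def)
  define g' where "g' = \<gamma>(c := \<gamma> c - 1)"
  have s: "(\<Sum>x\<in>Bset n. g' x) = int j"
    unfolding g'_def sum_upd[OF c] using g by (simp add: Gam_def)
  have d: "\<forall>i\<in>{1..n}. g' (U i) - g' (Bar i) = (m - dl c) i"
  proof
    fix i assume i: "i \<in> {1..n}"
    then have "\<gamma> (U i) - \<gamma> (Bar i) = m i" using g by (auto simp: Gam_def)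
    then show "g' (U i) - g' (Bar i) = (m - dl c) i" using c unfolding g'_def by (cases c) auto
  qed
  have "\<forall>x\<in>Bset n. g' x \<ge> 0" "\<forall>x. x \<notin> Bset n \<longrightarrow> g' x = 0"
    using g c pos unfolding g'_def Gam_def by auto
  then have "g' \<in> Gam n (m - dl c) j" using s d by (simp add: Gam_def)
  moreover have "\<gamma> = g'(c := g' c + 1)" by (auto simp: g'_def)
  ultimately show "\<gamma> \<in> (\<lambda>\<gamma>. \<gamma>(c := \<gamma> c + 1)) ` Gam n (m - dl c) j" by blast
qed

lemma estep_coeff:
  assumes c: "c \<in> Bset n"
  shows "Ph n g m (Suc j) - Ph n (g(c := g c + 1)) m (Suc j) = Q (g c) * Ph n (g(c := g c + 1)) (m - dl c) j"
proof -
  let ?g' = "g(c := g c + 1)"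
  let ?T = "\<lambda>\<gamma>. \<Prod>x\<in>Bset n. lf g \<gamma> x"
  have "Ph n g m (Suc j) - Ph n ?g' m (Suc j) = (\<Sum>\<gamma>\<in>Gam n m (Suc j). ?T \<gamma> * (1 - Q (\<gamma> c)))"
    unfolding Ph_def prod_lf_upd[OF c] by (simp add: sum_subtractf algebra_simps)
  also have "\<dots> = (\<Sum>\<gamma>\<in>{\<gamma> \<in> Gam n m (Suc j). \<gamma> c \<noteq> 0}. ?T \<gamma> * (1 - Q (\<gamma> c)))"
    by (rule sum.mono_neutral_right) auto
  also have "\<dots> = (\<Sum>\<gamma>\<in>Gam n (m - dl c) j. ?T (\<gamma>(c := \<gamma> c + 1)) * (1 - Q (\<gamma> c + 1)))"
    unfolding Gam_upd[OF c, symmetric]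
    by (subst sum.reindex) (auto simp: inj_on_def fun_eq_iff split: if_splits)
  also have "\<dots> = (\<Sum>\<gamma>\<in>Gam n (m - dl c) j. Q (g c) * (\<Prod>x\<in>Bset n. lf ?g' \<gamma> x))"
  proof (rule sum.cong[OF refl])
    fix \<gamma> assume g: "\<gamma> \<in> Gam n (m - dl c) j"
    have a0: "\<gamma> c \<ge> 0" using g c by (auto simp: Gam_def)
    define a where "a = nat (\<gamma> c)"
    have ga: "\<gamma> c = int a" using a0 by (simp add: a_def)
    have rest: "(\<Prod>x\<in>Bset n - {c}. lf g (\<gamma>(c := \<gamma> c + 1)) x) = (\<Prod>x\<in>Bset n - {c}. lf ?g' \<gamma> x)"
      by (rule prod.cong) (auto simp: lf_def)
    have key: "lf g (\<gamma>(c := \<gamma> c + 1)) c * (1 - Q (\<gamma> c + 1)) = Q (g c) * lf ?g' \<gamma> c"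
    proof -
      have l1: "lf g (\<gamma>(c := \<gamma> c + 1)) c = cw (Suc a) * Q (g c * (int a + 1))"
      proof -
        have "nat (\<gamma> c + 1) = Suc a" using ga by simp
        then show ?thesis by (simp add: lf_def ga)
      qed
      have l2: "1 - Q (\<gamma> c + 1) = 1 - Q (int (Suc a))" by (simp add: ga add.commute)
      have e: "int a + g c * (int a + 1) = g c + (g c + 1) * int a" by (simp add: algebra_simps)
      have "lf g (\<gamma>(c := \<gamma> c + 1)) c * (1 - Q (\<gamma> c + 1)) = (cw (Suc a) * (1 - Q (int (Suc a)))) * Q (g c * (int a + 1))"
        unfolding l1 l2 by (simp only: ac_simps)
      also have "\<dots> = cw a * (Q (int a) * Q (g c * (int a + 1)))" unfolding cw_Suc by (simp only: ac_simps)
      also have "Q (int a) * Q (g c * (int a + 1)) = Q (g c) * Q ((g c + 1) * int a)"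
        unfolding Q_add[symmetric] e ..
      also have "cw a * (Q (g c) * Q ((g c + 1) * int a)) = Q (g c) * lf ?g' \<gamma> c" by (simp add: lf_def ga)
      finally show ?thesis .
    qed
    have "?T (\<gamma>(c := \<gamma> c + 1)) * (1 - Q (\<gamma> c + 1))
        = lf g (\<gamma>(c := \<gamma> c + 1)) c * (1 - Q (\<gamma> c + 1)) * (\<Prod>x\<in>Bset n - {c}. lf g (\<gamma>(c := \<gamma> c + 1)) x)"
      using c by (simp add: prod.remove ac_simps)
    also have "\<dots> = Q (g c) * (lf ?g' \<gamma> c * (\<Prod>x\<in>Bset n - {c}. lf ?g' \<gamma> x))"
      unfolding key rest by (simp add: ac_simps)
    also have "\<dots> = Q (g c) * (\<Prod>x\<in>Bset n. lf ?g' \<gamma> x)"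
      using c by (simp add: prod.remove)
    finally show "?T (\<gamma>(c := \<gamma> c + 1)) * (1 - Q (\<gamma> c + 1)) = Q (g c) * (\<Prod>x\<in>Bset n. lf ?g' \<gamma> x)" .
  qed
  also have "\<dots> = Q (g c) * Ph n ?g' (m - dl c) j"
    by (simp add: Ph_def sum_distrib_left)
  finally show ?thesis .
qed




lemma Q2: "x + y = z \<Longrightarrow> Q x * Q y = Q z" by (simp add: Q_add[symmetric])
lemma Q3: "x + y + w = z \<Longrightarrow> Q x * Q y * Q w = Q z" by (simp add: Q_add[symmetric])
lemma Q4: "x + y + w + v = z \<Longrightarrow> Q x * Q y * Q w * Q v = Q z" by (simp add: Q_add[symmetric])

definition rr :: "nat \<Rightarrow> rat fls" where "rr t = Q (- int t) / qpoch t"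

lemma rr_0[simp]: "rr 0 = 1" by (simp add: rr_def)

lemma rr_Suc: "rr (Suc t) * (1 - Q (int (Suc t))) = Q (-1) * rr t"
proof -
  have nz: "1 - Q (int (Suc t)) \<noteq> 0" by (rule one_minus_Q_nz) simp
  have e: "Q (-1) * Q (- int t) = Q (- int (Suc t))" by (intro Q2) simp
  have "rr (Suc t) * (1 - Q (int (Suc t))) = Q (- int (Suc t)) / qpoch t"
    unfolding rr_def qpoch_Suc using nz by simp
  also have "\<dots> = Q (-1) * rr t" unfolding rr_def e[symmetric] by simp
  finally show ?thesis .
qed

definition SS :: "nat \<Rightarrow> nat \<Rightarrow> rat fls" where
  "SS a b = (\<Sum>t=0..min a b. rr t * cw (a - t) * cw (b - t))"

lemma SS_0: "SS 0 b = cw b" by (simp add: SS_def)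

lemma SS_rec: "SS (Suc a) b * (1 - Q (int (Suc a))) = Q (int a) * SS a b + (if b = 0 then 0 else Q (-1) * SS a (b - 1))"
proof -
  let ?M = "min (Suc a) b"
  have split: "1 - Q (int (Suc a)) = Q (int t) * (1 - Q (int (Suc a - t))) + (1 - Q (int t))" if "t \<le> Suc a" for t
  proof -
    have "Q (int t) * Q (int (Suc a - t)) = Q (int (Suc a))" using that by (simp add: Q_add[symmetric])
    then show ?thesis by (simp add: algebra_simps)
  qed
  have "SS (Suc a) b * (1 - Q (int (Suc a))) =
      (\<Sum>t=0..?M. rr t * cw (b - t) * Q (int t) * (cw (Suc a - t) * (1 - Q (int (Suc a - t)))))
    + (\<Sum>t=0..?M. rr t * (1 - Q (int t)) * cw (Suc a - t) * cw (b - t))"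
    unfolding SS_def sum_distrib_right sum.distrib[symmetric]
  proof (rule sum.cong[OF refl])
    fix t assume "t \<in> {0..?M}"
    then have "t \<le> Suc a" by simp
    note sp = split[OF this]
    show "rr t * cw (Suc a - t) * cw (b - t) * (1 - Q (int (Suc a))) =
      rr t * cw (b - t) * Q (int t) * (cw (Suc a - t) * (1 - Q (int (Suc a - t)))) +
      rr t * (1 - Q (int t)) * cw (Suc a - t) * cw (b - t)"
      unfolding sp by (simp only: algebra_simps)
  qed
  also have "(\<Sum>t=0..?M. rr t * cw (b - t) * Q (int t) * (cw (Suc a - t) * (1 - Q (int (Suc a - t)))))
      = Q (int a) * SS a b"
  proof -
    have "(\<Sum>t=0..?M. rr t * cw (b - t) * Q (int t) * (cw (Suc a - t) * (1 - Q (int (Suc a - t)))))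
        = (\<Sum>t=0..min a b. rr t * cw (b - t) * Q (int t) * (cw (Suc a - t) * (1 - Q (int (Suc a - t)))))"
    proof (cases "Suc a \<le> b")
      case True
      then have "?M = Suc (min a b)" by simp
      then show ?thesis by simp
    next
      case False
      then have "?M = min a b" by simp
      then show ?thesis by (simp only:)
    qed
    also have "\<dots> = (\<Sum>t=0..min a b. Q (int a) * (rr t * cw (a - t) * cw (b - t)))"
    proof (rule sum.cong[OF refl])
      fix t assume "t \<in> {0..min a b}"
      then have ta: "t \<le> a" by simp
      then have "Suc a - t = Suc (a - t)" by simp
      then have X: "cw (Suc a - t) * (1 - Q (int (Suc a - t))) = Q (int (a - t)) * cw (a - t)"
        by (simp only: cw_Suc)
      have Y: "Q (int t) * Q (int (a - t)) = Q (int a)" using ta by (intro Q2) simp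
      have "rr t * cw (b - t) * Q (int t) * (cw (Suc a - t) * (1 - Q (int (Suc a - t))))
          = (rr t * cw (a - t) * cw (b - t)) * (Q (int t) * Q (int (a - t)))" unfolding X by (simp only: ac_simps)
      then show "rr t * cw (b - t) * Q (int t) * (cw (Suc a - t) * (1 - Q (int (Suc a - t)))) =
          Q (int a) * (rr t * cw (a - t) * cw (b - t))" unfolding Y by (simp only: ac_simps)
    qed
    finally show ?thesis by (simp add: SS_def sum_distrib_left)
  qed
  also have "(\<Sum>t=0..?M. rr t * (1 - Q (int t)) * cw (Suc a - t) * cw (b - t))
      = (if b = 0 then 0 else Q (-1) * SS a (b - 1))"
  proof (cases b)
    case 0
    then show ?thesis by simp
  next
    case (Suc b')
    have M: "?M = Suc (min a b')" using Suc by simp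
    have "(\<Sum>t=0..?M. rr t * (1 - Q (int t)) * cw (Suc a - t) * cw (b - t))
        = (\<Sum>t=0..min a b'. rr (Suc t) * (1 - Q (int (Suc t))) * cw (Suc a - Suc t) * cw (b - Suc t))"
      unfolding M sum.atLeast0_atMost_Suc_shift by simp
    also have "\<dots> = (\<Sum>t=0..min a b'. Q (-1) * (rr t * cw (a - t) * cw (b' - t)))"
    proof (rule sum.cong[OF refl])
      fix t
      have "rr (Suc t) * (1 - Q (int (Suc t))) = Q (-1) * rr t" by (rule rr_Suc)
      then show "rr (Suc t) * (1 - Q (int (Suc t))) * cw (Suc a - Suc t) * cw (b - Suc t) =
          Q (-1) * (rr t * cw (a - t) * cw (b' - t))" using Suc by (simp add: ac_simps)
    qed
    finally show ?thesis using Suc by (simp add: SS_def sum_distrib_left)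
  qed
  finally show ?thesis .
qed

lemma core: "SS a b = cw a * cw b * Q (- (int a * int b))"
proof (induction a arbitrary: b)
  case 0
  then show ?case by (simp add: SS_0)
next
  case (Suc a)
  have nz: "1 - Q (int (Suc a)) \<noteq> 0" by (rule one_minus_Q_nz) simp
  have "SS (Suc a) b * (1 - Q (int (Suc a))) = cw (Suc a) * cw b * Q (- (int (Suc a) * int b)) * (1 - Q (int (Suc a)))"
  proof (cases b)
    case 0
    then show ?thesis using SS_rec[of a b] Suc.IH[of b] cw_Suc[of a] by (simp add: ac_simps)
  next
    case (Suc b')
    have cb: "cw b = cw (Suc b')" using Suc by simp
    have cwb: "cw b' = cw b * (1 - Q (int b)) * Q (- int b')"
    proof -
      have "cw (Suc b') * (1 - Q (int (Suc b'))) * Q (- int b') = Q (int b') * cw b' * Q (- int b')"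
        by (simp only: cw_Suc)
      also have "\<dots> = cw b' * (Q (int b') * Q (- int b'))" by (simp only: ac_simps)
      also have "Q (int b') * Q (- int b') = 1" using Q2[of "int b'" "- int b'" 0] by simp
      also have "cw b' * 1 = cw b'" by simp
      finally show ?thesis using Suc by simp
    qed
    have "SS (Suc a) b * (1 - Q (int (Suc a))) = Q (int a) * SS a b + Q (-1) * SS a b'"
      using SS_rec[of a b] Suc by simp
    also have "\<dots> = Q (int a) * (cw a * cw b * Q (- (int a * int b))) + Q (-1) * (cw a * cw b' * Q (- (int a * int b')))"
      using Suc.IH by simp
    also have "\<dots> = cw a * cw b * (Q (int a) * Q (- (int a * int b)) + Q (-1) * (1 - Q (int b)) * Q (- int b') * Q (- (int a * int b')))"
      unfolding cwb by (simp add: algebra_simps)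
    also have "Q (-1) * (1 - Q (int b)) * Q (- int b') * Q (- (int a * int b')) = Q (int a - int b - int a * int b) - Q (int a - int a * int b)"
    proof -
      have e1: "Q (-1) * Q (- int b') * Q (- (int a * int b')) = Q (int a - int b - int a * int b)"
        using Suc by (intro Q3) (simp add: algebra_simps)
      have e2: "Q (-1) * Q (int b) * Q (- int b') * Q (- (int a * int b')) = Q (int a - int a * int b)"
        using Suc by (intro Q4) (simp add: algebra_simps)
      have "Q (-1) * (1 - Q (int b)) * Q (- int b') * Q (- (int a * int b')) =
          Q (-1) * Q (- int b') * Q (- (int a * int b')) - Q (-1) * Q (int b) * Q (- int b') * Q (- (int a * int b'))"
        by (simp add: algebra_simps)
      then show ?thesis unfolding e1 e2 .
    qed
    also have "Q (int a) * Q (- (int a * int b)) = Q (int a - int a * int b)" by (simp add: Q_add[symmetric])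
    finally have "SS (Suc a) b * (1 - Q (int (Suc a))) = cw a * cw b * Q (int a - int b - int a * int b)"
      by simp
    also have "\<dots> = cw (Suc a) * cw b * Q (- (int (Suc a) * int b)) * (1 - Q (int (Suc a)))"
    proof -
      have "cw (Suc a) * (1 - Q (int (Suc a))) = Q (int a) * cw a" by (rule cw_Suc)
      moreover have "Q (int a) * Q (- (int (Suc a) * int b)) = Q (int a - int b - int a * int b)"
        by (intro Q2) (simp add: algebra_simps)
      ultimately show ?thesis by (metis (no_types, lifting) mult.assoc mult.commute)
    qed
    finally show ?thesis .
  qed
  then show ?case using nz by simp
qed




definition PP :: "nat \<Rightarrow> (bel \<Rightarrow> int) \<Rightarrow> (nat \<Rightarrow> int) \<Rightarrow> rat fls fps" where
  "PP n g m = Abs_fps (Ph n g m)"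

definition RR :: "int \<Rightarrow> rat fls fps" where
  "RR e = Abs_fps (\<lambda>k. if even k then Q (e * int (k div 2)) / qpoch (k div 2) else 0)"

definition sc :: "int \<Rightarrow> rat fls fps \<Rightarrow> rat fls fps" where
  "sc d F = Abs_fps (\<lambda>k. Q (d * int k) * F $ k)"

lemma Gam_0: "\<gamma> \<in> Gam n m 0 \<Longrightarrow> \<gamma> x = 0"
proof -
  assume g: "\<gamma> \<in> Gam n m 0"
  show "\<gamma> x = 0"
  proof (cases "x \<in> Bset n")
    case True
    then have "\<gamma> x \<le> 0" using Gam_le[OF g True] by simp
    moreover have "\<gamma> x \<ge> 0" using g True by (auto simp: Gam_def)
    ultimately show ?thesis by simp
  next
    case False then show ?thesis using g by (auto simp: Gam_def)
  qed
qed

lemma Ph_0_indep: "Ph n g m 0 = Ph n g' m 0"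
  unfolding Ph_def
  by (rule sum.cong[OF refl]) (simp add: lf_def Gam_0)

lemma estep: 
  assumes c: "c \<in> Bset n"
  shows "PP n g m = PP n (g(c := g c + 1)) m + fps_const (Q (g c)) * (fps_X * PP n (g(c := g c + 1)) (m - dl c))"
proof (rule fps_ext)
  fix k show "PP n g m $ k = (PP n (g(c := g c + 1)) m + fps_const (Q (g c)) * (fps_X * PP n (g(c := g c + 1)) (m - dl c))) $ k"
  proof (cases k)
    case 0 then show ?thesis by (simp add: PP_def Ph_0_indep[of n g m "g(c := g c + 1)"])
  next
    case (Suc j)
    then show ?thesis using estep_coeff[OF c, of g m j] by (simp add: PP_def algebra_simps)
  qed
qed

lemma rstep: "RR e = RR (e + 1) + fps_const (Q e) * (fps_X ^ 2 * RR e)"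
proof (rule fps_ext)
  fix k
  show "RR e $ k = (RR (e + 1) + fps_const (Q e) * (fps_X ^ 2 * RR e)) $ k"
  proof (cases "even k")
    case False
    then show ?thesis by (simp add: RR_def fps_X_power_mult_nth)
  next
    case True
    then obtain t where k: "k = 2 * t" by auto
    show ?thesis
    proof (cases t)
      case 0 then show ?thesis using k by (simp add: RR_def fps_X_power_mult_nth)
    next
      case (Suc t')
      have nz: "1 - Q (int (Suc t')) \<noteq> 0" by (rule one_minus_Q_nz) simp
      have a: "Q (e * int (Suc t')) = Q e * Q (e * int t')" by (intro Q2[symmetric]) (simp add: algebra_simps)
      have b: "Q ((e + 1) * int (Suc t')) = Q (e * int (Suc t')) * Q (int (Suc t'))" by (intro Q2[symmetric]) (simp add: algebra_simps)
      have r1: "RR e $ k = Q (e * int (Suc t')) / qpoch (Suc t')" using k Suc by (simp add: RR_def)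
      have r2: "RR (e + 1) $ k = Q ((e + 1) * int (Suc t')) / qpoch (Suc t')" using k Suc by (simp add: RR_def)
      have "RR e $ k - RR (e + 1) $ k = Q (e * int (Suc t')) * (1 - Q (int (Suc t'))) / qpoch (Suc t')"
        unfolding r1 r2 b by (simp add: algebra_simps diff_divide_distrib)
      also have "\<dots> = Q (e * int (Suc t')) / qpoch t'"
        using nz unfolding qpoch_Suc by simp
      also have "\<dots> = Q e * (Q (e * int t') / qpoch t')" unfolding a by simp
      also have "\<dots> = (fps_const (Q e) * (fps_X ^ 2 * RR e)) $ k"
        using k Suc by (simp add: RR_def fps_X_power_mult_nth)
      finally show ?thesis by (simp add: algebra_simps)
    qed
  qed
qed

lemma sc_mult: "sc d (F * G) = sc d F * sc d G"
proof (rule fps_ext)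
  fix k
  have "sc d (F * G) $ k = (\<Sum>i=0..k. Q (d * int k) * (F $ i * G $ (k - i)))"
    by (simp add: sc_def fps_mult_nth sum_distrib_left)
  also have "\<dots> = (\<Sum>i=0..k. (Q (d * int i) * F $ i) * (Q (d * int (k - i)) * G $ (k - i)))"
  proof (rule sum.cong[OF refl])
    fix i assume "i \<in> {0..k}"
    then have "Q (d * int i) * Q (d * int (k - i)) = Q (d * int k)"
      by (intro Q2) (simp add: of_nat_diff algebra_simps)
    then show "Q (d * int k) * (F $ i * G $ (k - i)) = Q (d * int i) * F $ i * (Q (d * int (k - i)) * G $ (k - i))"
      by (metis (no_types, lifting) mult.assoc mult.left_commute)
  qed
  also have "\<dots> = (sc d F * sc d G) $ k" by (simp add: sc_def fps_mult_nth)
  finally show "sc d (F * G) $ k = (sc d F * sc d G) $ k" .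
qed

lemma sc_add: "sc d (F + G) = sc d F + sc d G"
  by (rule fps_ext) (simp add: sc_def algebra_simps)

lemma sc_diff: "sc d (F - G) = sc d F - sc d G"
  by (rule fps_ext) (simp add: sc_def algebra_simps)

lemma sc_sum: "finite A \<Longrightarrow> sc d (\<Sum>c\<in>A. F c) = (\<Sum>c\<in>A. sc d (F c))"
  by (induction A rule: finite_induct) (auto simp: sc_add, simp add: sc_def fps_ext)

lemma sc_const: "sc d (fps_const a) = fps_const a"
  by (rule fps_ext) (simp add: sc_def)

lemma sc_X: "sc d fps_X = fps_const (Q d) * fps_X"
  by (rule fps_ext) (simp add: sc_def fps_X_def)

lemma sc_RR: "sc d (RR e) = RR (e + 2 * d)"
proof (rule fps_ext)
  fix k
  show "sc d (RR e) $ k = RR (e + 2 * d) $ k"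
  proof (cases "even k")
    case True
    then obtain t where k: "k = 2 * t" by auto
    have "Q (d * int k) * Q (e * int t) = Q ((e + 2 * d) * int t)"
      using k by (intro Q2) (simp add: algebra_simps)
    then show ?thesis using k by (simp add: sc_def RR_def)
  next
    case False then show ?thesis by (simp add: sc_def RR_def)
  qed
qed

lemma Q_sum: "finite A \<Longrightarrow> (\<Prod>x\<in>A. Q (f x)) = Q (\<Sum>x\<in>A. f x)"
  by (induction A rule: finite_induct) (auto simp: Q_add)

lemma sc_PP: "sc d (PP n g m) = PP n (\<lambda>x. g x + d) m"
proof (rule fps_ext)
  fix k
  have "sc d (PP n g m) $ k = (\<Sum>\<gamma>\<in>Gam n m k. Q (d * int k) * (\<Prod>x\<in>Bset n. lf g \<gamma> x))"
    by (simp add: sc_def PP_def Ph_def sum_distrib_left)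
  also have "\<dots> = (\<Sum>\<gamma>\<in>Gam n m k. \<Prod>x\<in>Bset n. lf (\<lambda>x. g x + d) \<gamma> x)"
  proof (rule sum.cong[OF refl])
    fix \<gamma> assume g: "\<gamma> \<in> Gam n m k"
    have "(\<Prod>x\<in>Bset n. lf (\<lambda>x. g x + d) \<gamma> x) = (\<Prod>x\<in>Bset n. lf g \<gamma> x * Q (d * \<gamma> x))"
      by (rule prod.cong[OF refl]) (simp add: lf_def distrib_right Q_add)
    also have "\<dots> = (\<Prod>x\<in>Bset n. lf g \<gamma> x) * Q (\<Sum>x\<in>Bset n. d * \<gamma> x)"
      by (simp add: prod.distrib Q_sum)
    also have "(\<Sum>x\<in>Bset n. d * \<gamma> x) = d * int k"
      using g by (simp add: Gam_def sum_distrib_left[symmetric])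
    finally show "Q (d * int k) * (\<Prod>x\<in>Bset n. lf g \<gamma> x) = (\<Prod>x\<in>Bset n. lf (\<lambda>x. g x + d) \<gamma> x)"
      by (simp add: mult.commute)
  qed
  finally show "sc d (PP n g m) $ k = PP n (\<lambda>x. g x + d) m $ k" by (simp add: PP_def Ph_def)
qed

lemma coeff_extract:
  assumes "F - sc 1 F = (\<Sum>c\<in>A. fps_const (Q (h c)) * (fps_X * sc (h c) (G c)))"
  shows "(1 - Q (int (Suc j))) * F $ Suc j = (\<Sum>c\<in>A. Q (h c * int (Suc j)) * G c $ j)"
proof -
  have "(F - sc 1 F) $ Suc j = (\<Sum>c\<in>A. Q (h c * int (Suc j)) * G c $ j)"
  proof -
    have "(F - sc 1 F) $ Suc j = (\<Sum>c\<in>A. (fps_const (Q (h c)) * (fps_X * sc (h c) (G c))) $ Suc j)"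
      unfolding assms by (simp add: fps_sum_nth)
    also have "\<dots> = (\<Sum>c\<in>A. Q (h c * int (Suc j)) * G c $ j)"
    proof (rule sum.cong[OF refl])
      fix c
      have e: "Q (h c) * Q (h c * int j) = Q (h c * int (Suc j))" by (intro Q2) (simp add: algebra_simps)
      have "(fps_const (Q (h c)) * (fps_X * sc (h c) (G c))) $ Suc j = Q (h c) * Q (h c * int j) * G c $ j"
        by (simp add: sc_def mult.assoc)
      then show "(fps_const (Q (h c)) * (fps_X * sc (h c) (G c))) $ Suc j = Q (h c * int (Suc j)) * G c $ j"
        unfolding e .
    qed
    finally show ?thesis .
  qed
  then show ?thesis by (simp add: sc_def algebra_simps)
qed




lemma rk_inj: "x \<in> Bset n \<Longrightarrow> y \<in> Bset n \<Longrightarrow> rk n x = rk n y \<Longrightarrow> x = y"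
  by (cases x; cases y) auto

lemma rk_range: "x \<in> Bset n \<Longrightarrow> 1 \<le> rk n x \<and> rk n x \<le> 2 * n"
  by (cases x) auto

lemma H_std:
  assumes "n \<ge> 2" "b \<in> Bset n" "c \<in> Bset n"
  shows "H n b c = (if b = Bar n \<and> c = U n then 0 else if b = U 1 \<and> c = Bar 1 then -1
                    else if rk n c \<le> rk n b then 1 else 0)"
  using assms by (cases b; cases c) (auto simp: H_def prec_def)

definition Lr :: "nat \<Rightarrow> nat \<Rightarrow> bel" where
  "Lr n r = (if r \<le> n then U r else Bar (2 * n + 1 - r))"

lemma Lr_in: "1 \<le> r \<Longrightarrow> r \<le> 2 * n \<Longrightarrow> Lr n r \<in> Bset n"
  by (auto simp: Lr_def)

lemma rk_Lr: "1 \<le> r \<Longrightarrow> r \<le> 2 * n \<Longrightarrow> rk n (Lr n r) = r"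
  by (auto simp: Lr_def)

lemma Lr_rk: "x \<in> Bset n \<Longrightarrow> Lr n (rk n x) = x"
  by (cases x) (auto simp: Lr_def)

lemma sum_Bset_rk: "(\<Sum>c\<in>Bset n. f c) = (\<Sum>r\<in>{1..2*n}. f (Lr n r))"
proof (rule sum.reindex_bij_betw[symmetric])
  show "bij_betw (Lr n) {1..2 * n} (Bset n)"
  proof (rule bij_betw_byWitness[where f' = "rk n"])
    show "\<forall>a\<in>{1..2 * n}. rk n (Lr n a) = a" using rk_Lr by auto
    show "\<forall>a'\<in>Bset n. Lr n (rk n a') = a'" using Lr_rk by auto
    show "Lr n ` {1..2 * n} \<subseteq> Bset n" using Lr_in by auto
    show "rk n ` Bset n \<subseteq> {1..2 * n}" using rk_range by auto
  qed
qed

definition Ind :: "nat \<Rightarrow> nat \<Rightarrow> nat \<Rightarrow> bel \<Rightarrow> int" where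
  "Ind n lo hi d = (if d \<in> Bset n \<and> lo < rk n d \<and> rk n d \<le> hi then 1 else 0)"

lemma PP_cong: "(\<And>x. x \<in> Bset n \<Longrightarrow> g x = g' x) \<Longrightarrow> PP n g m = PP n g' m"
  unfolding PP_def Ph_def lf_def by (rule arg_cong[where f=Abs_fps]) (auto intro!: sum.cong prod.cong ext)

lemma TL:
  assumes "lo \<le> hi" "hi \<le> 2 * n"
  shows "PP n g m = PP n (\<lambda>x. g x + Ind n lo hi x) m +
    (\<Sum>r\<in>{lo<..hi}. fps_const (Q (g (Lr n r))) * (fps_X * PP n (\<lambda>x. g x + Ind n lo r x) (m - dl (Lr n r))))"
  using assms
proof (induction hi rule: dec_induct)
  case base
  have "PP n (\<lambda>x. g x + Ind n lo lo x) m = PP n g m" by (rule PP_cong) (simp add: Ind_def)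
  then show ?case by simp
next
  case (step h)
  let ?c = "Lr n (Suc h)"
  let ?g = "\<lambda>x. g x + Ind n lo h x"
  have cB: "?c \<in> Bset n" using step by (intro Lr_in) auto
  have rkc: "rk n ?c = Suc h" using step by (intro rk_Lr) auto
  have gc: "?g ?c = g ?c" using rkc by (simp add: Ind_def)
  have upd: "PP n (?g(?c := g ?c + 1)) m' = PP n (\<lambda>x. g x + Ind n lo (Suc h) x) m'" for m'
  proof (rule PP_cong)
    fix x assume xB: "x \<in> Bset n"
    show "(?g(?c := g ?c + 1)) x = g x + Ind n lo (Suc h) x"
    proof (cases "x = ?c")
      case True then show ?thesis using rkc step.hyps by (simp add: Ind_def cB)
    next
      case False
      then have "rk n x \<noteq> Suc h" using rk_inj[OF xB cB] rkc by auto
      then show ?thesis using False by (auto simp: Ind_def)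
    qed
  qed
  have E: "PP n ?g m = PP n (\<lambda>x. g x + Ind n lo (Suc h) x) m +
     fps_const (Q (g ?c)) * (fps_X * PP n (\<lambda>x. g x + Ind n lo (Suc h) x) (m - dl ?c))"
    using estep[OF cB, of ?g m] unfolding gc upd .
  have ins: "{lo<..Suc h} = insert (Suc h) {lo<..h}" using step.hyps by auto
  have IH: "PP n g m = PP n ?g m + (\<Sum>r\<in>{lo<..h}. fps_const (Q (g (Lr n r))) * (fps_X * PP n (\<lambda>x. g x + Ind n lo r x) (m - dl (Lr n r))))"
    using step.IH step.prems Suc_leD by blast
  have sI: "\<And>F. (\<Sum>r\<in>insert (Suc h) {lo<..h}. F r) = F (Suc h) + (\<Sum>r\<in>{lo<..h}. F r)"
    by (subst sum.insert) auto
  show ?case unfolding IH E ins sI by (simp only: add.assoc)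
qed

definition sv :: "nat \<Rightarrow> bel \<Rightarrow> nat" where "sv n b = (case b of U _ \<Rightarrow> 1 | Bar _ \<Rightarrow> n)"

definition ee :: "nat \<Rightarrow> bel \<Rightarrow> int" where
  "ee n b = H n b (U (sv n b)) + H n b (Bar (sv n b)) - 1"

definition FF :: "nat \<Rightarrow> bel \<Rightarrow> (nat \<Rightarrow> int) \<Rightarrow> rat fls fps" where
  "FF n b m = RR (ee n b) * PP n (H n b) m"

lemma sc_FF: "sc d (FF n c m) = RR (ee n c + 2 * d) * PP n (\<lambda>x. H n c x + d) m"
  by (simp add: FF_def sc_mult sc_RR sc_PP)

lemma ee_vals:
  assumes "n \<ge> 2"
  shows "ee n (U 1) = -1" "2 \<le> k \<Longrightarrow> k \<le> n \<Longrightarrow> ee n (U k) = 0"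
    "ee n (Bar n) = 0" "1 \<le> k \<Longrightarrow> k < n \<Longrightarrow> ee n (Bar k) = 1"
  using assms by (auto simp: ee_def sv_def H_def prec_def)




lemma rk_eq_iff: "x \<in> Bset n \<Longrightarrow> n \<ge> 1 \<Longrightarrow>
   (x = U n \<longleftrightarrow> rk n x = n) \<and> (x = Bar n \<longleftrightarrow> rk n x = n + 1) \<and> (x = U 1 \<longleftrightarrow> rk n x = 1) \<and> (x = Bar 1 \<longleftrightarrow> rk n x = 2 * n)"
  by (cases x) auto

lemma H_rk:
  assumes "n \<ge> 2" "b \<in> Bset n" "c \<in> Bset n"
  shows "H n b c = (if rk n b = n + 1 \<and> rk n c = n then 0 else if rk n b = 1 \<and> rk n c = 2 * n then -1
                    else if rk n c \<le> rk n b then 1 else 0)"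
  using H_std[OF assms] rk_eq_iff[OF assms(2)] rk_eq_iff[OF assms(3)] assms(1) by auto

lemma Ind_B: "x \<in> Bset n \<Longrightarrow> Ind n lo hi x = (if lo < rk n x \<and> rk n x \<le> hi then 1 else 0)"
  by (simp add: Ind_def)

lemma sum_gAM_split: "(a::nat) \<le> b \<Longrightarrow> b \<le> c \<Longrightarrow> sum f {a<..c} = sum f {a<..b} + sum f {b<..c}"
proof -
  assume "a \<le> b" "b \<le> c"
  then have "{a<..c} = {a<..b} \<union> {b<..c}" by auto
  then show ?thesis by (simp add: sum.union_disjoint ivl_disj_int)
qed

lemma sum_gAM_single: "sum f {a<..Suc a} = f (Suc a)"
proof -
  have "{a<..Suc a} = {Suc a}" by auto
  then show ?thesis by simp
qed

lemma dl_cancel: "m - dl (U i) - dl (Bar i) = m" "m - dl (Bar i) - dl (U i) = m"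
  by (rule ext, simp)+

definition Tm :: "nat \<Rightarrow> bel \<Rightarrow> (nat \<Rightarrow> int) \<Rightarrow> bel \<Rightarrow> rat fls fps" where
  "Tm n b m c = fps_const (Q (H n b c)) * (fps_X * sc (H n b c) (FF n c (m - dl c)))"

lemma Tm_eq: "Tm n b m c = fps_const (Q (H n b c)) * (fps_X * (RR (ee n c + 2 * H n b c) * PP n (\<lambda>x. H n c x + H n b c) (m - dl c)))"
  by (simp add: Tm_def sc_FF)

lemma seg:
  assumes "\<And>r. r \<in> {lo<..hi} \<Longrightarrow> ee n (Lr n r) + 2 * H n b (Lr n r) = e"
    "\<And>r. r \<in> {lo<..hi} \<Longrightarrow> H n b (Lr n r) = g (Lr n r)"
    "\<And>r x. r \<in> {lo<..hi} \<Longrightarrow> x \<in> Bset n \<Longrightarrow> H n (Lr n r) x + H n b (Lr n r) = g x + Ind n lo r x"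
  shows "(\<Sum>r\<in>{lo<..hi}. Tm n b m (Lr n r)) = RR e * (\<Sum>r\<in>{lo<..hi}. fps_const (Q (g (Lr n r))) * (fps_X * PP n (\<lambda>x. g x + Ind n lo r x) (m - dl (Lr n r))))"
  unfolding sum_distrib_left
proof (rule sum.cong[OF refl])
  fix r assume r: "r \<in> {lo<..hi}"
  have P: "PP n (\<lambda>x. H n (Lr n r) x + H n b (Lr n r)) (m - dl (Lr n r)) = PP n (\<lambda>x. g x + Ind n lo r x) (m - dl (Lr n r))"
    by (rule PP_cong) (rule assms(3)[OF r])
  then show "Tm n b m (Lr n r) = RR e * (fps_const (Q (g (Lr n r))) * (fps_X * PP n (\<lambda>x. g x + Ind n lo r x) (m - dl (Lr n r))))"
    unfolding Tm_eq assms(1)[OF r] P unfolding assms(2)[OF r] by (simp add: ac_simps)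
qed

lemma seg1corr:
  assumes cB: "c \<in> Bset n" and dB: "d \<in> Bset n"
    and e: "ee n c + 2 * H n b c = e" and hb: "H n b c = g c"
    and pw: "\<And>x. x \<in> Bset n \<Longrightarrow> 1 \<le> rk n x \<Longrightarrow> rk n x \<le> 2 * n \<Longrightarrow> ((\<lambda>x. H n c x + H n b c)(d := H n c d + H n b c + 1)) x = g' x"
    and mm: "m - dl c - dl d = m"
  shows "Tm n b m c = RR e * (fps_const (Q (g c)) * (fps_X * PP n g' (m - dl c)))
     + fps_const (Q (g c)) * fps_const (Q (H n c d + H n b c)) * (fps_X * (fps_X * (RR e * PP n g' m)))"
proof -
  let ?G = "\<lambda>x. H n c x + H n b c"
  have E: "PP n ?G (m - dl c) = PP n (?G(d := ?G d + 1)) (m - dl c) + fps_const (Q (?G d)) * (fps_X * PP n (?G(d := ?G d + 1)) (m - dl c - dl d))"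
    by (rule estep[OF dB])
  have C: "PP n (?G(d := ?G d + 1)) m' = PP n g' m'" for m'
    by (rule PP_cong) (use pw rk_range in simp)
  show ?thesis unfolding Tm_eq e E C mm unfolding hb by (simp add: algebra_simps)
qed





lemma ee_rk:
  assumes "n \<ge> 2" "c \<in> Bset n"
  shows "ee n c = (if rk n c = 1 then -1 else if rk n c \<le> n + 1 then 0 else 1)"
  using assms by (cases c) (auto simp: ee_def sv_def H_def prec_def)

lemma eq_rk: "x \<in> Bset n \<Longrightarrow> y \<in> Bset n \<Longrightarrow> x = y \<longleftrightarrow> rk n x = rk n y"
  using rk_inj by blast

lemma eqU: "x \<in> Bset n \<Longrightarrow> 1 \<le> i \<Longrightarrow> i \<le> n \<Longrightarrow> x = U i \<longleftrightarrow> rk n x = i"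
  using eq_rk[of x n "U i"] by simp

lemma eqBar: "x \<in> Bset n \<Longrightarrow> 1 \<le> i \<Longrightarrow> i \<le> n \<Longrightarrow> x = Bar i \<longleftrightarrow> rk n x = 2 * n + 1 - i"
  using eq_rk[of x n "Bar i"] by simp

lemma lin5:
  fixes P0 :: "'a::ab_group_add"
  shows "P0 = A + B + P2 \<Longrightarrow> P2 = P2' + X2 \<Longrightarrow> P2' = C + D + P4 \<Longrightarrow> P4 = P4' + X4 \<Longrightarrow> P4' = P5 + E
    \<Longrightarrow> P0 - P5 = A + B + X2 + C + D + X4 + E"
  by (simp add: algebra_simps)

lemma seg':
  assumes "hi \<le> 2 * n"
    "\<And>r. lo < r \<Longrightarrow> r \<le> hi \<Longrightarrow> Lr n r \<in> Bset n \<Longrightarrow> rk n (Lr n r) = r \<Longrightarrow> ee n (Lr n r) + 2 * H n b (Lr n r) = e"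
    "\<And>r. lo < r \<Longrightarrow> r \<le> hi \<Longrightarrow> Lr n r \<in> Bset n \<Longrightarrow> rk n (Lr n r) = r \<Longrightarrow> H n b (Lr n r) = g (Lr n r)"
    "\<And>r x. lo < r \<Longrightarrow> r \<le> hi \<Longrightarrow> Lr n r \<in> Bset n \<Longrightarrow> rk n (Lr n r) = r \<Longrightarrow> x \<in> Bset n \<Longrightarrow> 1 \<le> rk n x \<Longrightarrow> rk n x \<le> 2 * n \<Longrightarrow>
        H n (Lr n r) x + H n b (Lr n r) = g x + Ind n lo r x"
  shows "(\<Sum>r\<in>{lo<..hi}. Tm n b m (Lr n r)) = RR e * (\<Sum>r\<in>{lo<..hi}. fps_const (Q (g (Lr n r))) * (fps_X * PP n (\<lambda>x. g x + Ind n lo r x) (m - dl (Lr n r))))"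
proof (rule seg)
  fix r assume r: "r \<in> {lo<..hi}"
  then have r1: "lo < r" "r \<le> hi" by auto
  have rB: "Lr n r \<in> Bset n" "rk n (Lr n r) = r" using r1 assms(1) by (auto intro: Lr_in rk_Lr)
  show "ee n (Lr n r) + 2 * H n b (Lr n r) = e" using assms(2)[OF r1 rB] .
  show "H n b (Lr n r) = g (Lr n r)" using assms(3)[OF r1 rB] .
  fix x assume x: "x \<in> Bset n"
  show "H n (Lr n r) x + H n b (Lr n r) = g x + Ind n lo r x"
    using assms(4)[OF r1 rB x] rk_range[OF x] by blast
qed

lemma FE_Uk:
  assumes n4: "n \<ge> 4" and k2: "2 \<le> k" and kn: "k \<le> n"
  shows "FF n (U k) m - sc 1 (FF n (U k) m) = (\<Sum>c\<in>Bset n. Tm n (U k) m c)"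
proof -
  let ?b = "U k"
  have n2: "n \<ge> 2" using n4 by simp
  have bB: "?b \<in> Bset n" using k2 kn by simp
  have rkb: "rk n ?b = k" by simp
  define g0 where "g0 = H n ?b"
  define g1 where "g1 = (\<lambda>x. g0 x + Ind n k n x)"
  define g2 where "g2 = (\<lambda>x. g1 x + Ind n n (n+1) x)"
  define g3 where "g3 = (\<lambda>x. g2 x + Ind n (n+1) (2*n) x)"
  define g4 where "g4 = (\<lambda>x. g3 x + Ind n 0 1 x)"
  define g5 where "g5 = (\<lambda>x. g4 x + Ind n 1 k x)"
  define S where "S g lo hi = (\<Sum>r\<in>{lo<..hi}. fps_const (Q (g (Lr n r))) * (fps_X * PP n (\<lambda>x. g x + Ind n lo r x) (m - dl (Lr n r))))" for g lo hi
  have T1: "PP n g0 m = PP n g1 m + S g0 k n" unfolding g1_def S_def by (rule TL) (use kn in auto)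
  have T2: "PP n g1 m = PP n g2 m + S g1 n (n+1)" unfolding g2_def S_def by (rule TL) (use n4 in auto)
  have T3: "PP n g2 m = PP n g3 m + S g2 (n+1) (2*n)" unfolding g3_def S_def by (rule TL) (use n4 in auto)
  have T4: "PP n g3 m = PP n g4 m + S g3 0 1" unfolding g4_def S_def by (rule TL) (use n4 in auto)
  have T5: "PP n g4 m = PP n g5 m + S g4 1 k" unfolding g5_def S_def by (rule TL) (use k2 kn in auto)
  have Ln1: "Lr n (n+1) = Bar n" by (simp add: Lr_def)
  have L1: "Lr n 1 = U 1" using n4 by (simp add: Lr_def)
  have R: "(\<Sum>c\<in>Bset n. Tm n ?b m c) = Tm n ?b m (U 1) + (\<Sum>r\<in>{1<..k}. Tm n ?b m (Lr n r))
      + (\<Sum>r\<in>{k<..n}. Tm n ?b m (Lr n r)) + Tm n ?b m (Bar n) + (\<Sum>r\<in>{n+1<..2*n}. Tm n ?b m (Lr n r))"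
  proof -
    have "{1..2*n} = {0<..2*n}" by auto
    then have "(\<Sum>c\<in>Bset n. Tm n ?b m c) = (\<Sum>r\<in>{0<..2*n}. Tm n ?b m (Lr n r))" by (simp add: sum_Bset_rk)
    also have "\<dots> = (\<Sum>r\<in>{0<..1}. Tm n ?b m (Lr n r)) + (\<Sum>r\<in>{1<..k}. Tm n ?b m (Lr n r)) + (\<Sum>r\<in>{k<..n}. Tm n ?b m (Lr n r))
        + (\<Sum>r\<in>{n<..n+1}. Tm n ?b m (Lr n r)) + (\<Sum>r\<in>{n+1<..2*n}. Tm n ?b m (Lr n r))"
    proof -
      let ?f = "\<lambda>r. Tm n ?b m (Lr n r)"
      have a: "sum ?f {0<..2*n} = sum ?f {0<..1} + sum ?f {1<..2*n}" by (rule sum_gAM_split) (use n4 in auto)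
      have b: "sum ?f {1<..2*n} = sum ?f {1<..k} + sum ?f {k<..2*n}" by (rule sum_gAM_split) (use k2 kn in auto)
      have c: "sum ?f {k<..2*n} = sum ?f {k<..n} + sum ?f {n<..2*n}" by (rule sum_gAM_split) (use kn in auto)
      have d: "sum ?f {n<..2*n} = sum ?f {n<..n+1} + sum ?f {n+1<..2*n}" by (rule sum_gAM_split) (use n4 in auto)
      show ?thesis unfolding a b c d by (simp only: add.assoc)
    qed
    also have "(\<Sum>r\<in>{0<..1}. Tm n ?b m (Lr n r)) = Tm n ?b m (U 1)"
    proof -
      have "{0<..1::nat} = {1}" by auto
      then show ?thesis using L1 by simp
    qed
    also have "(\<Sum>r\<in>{n<..n+1}. Tm n ?b m (Lr n r)) = Tm n ?b m (Bar n)"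
    proof -
      have "{n<..n+1} = {n+1}" by auto
      then show ?thesis using Ln1 by simp
    qed
    finally show ?thesis .
  qed
  have S1: "(\<Sum>r\<in>{k<..n}. Tm n ?b m (Lr n r)) = RR 0 * S g0 k n"
    unfolding S_def by (rule seg') (use n2 bB k2 kn in \<open>auto simp: H_rk ee_rk Ind_B g0_def\<close>)
  have S3: "(\<Sum>r\<in>{n+1<..2*n}. Tm n ?b m (Lr n r)) = RR 1 * S g2 (n+1) (2*n)"
    unfolding S_def by (rule seg') (use n2 bB k2 kn in \<open>auto simp: H_rk ee_rk Ind_B g0_def g1_def g2_def\<close>)
  have S5: "(\<Sum>r\<in>{1<..k}. Tm n ?b m (Lr n r)) = RR 2 * S g4 1 k"
    unfolding S_def by (rule seg') (use n2 bB k2 kn in \<open>auto simp: H_rk ee_rk Ind_B g0_def g1_def g2_def g3_def g4_def\<close>)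
  have S2: "Tm n ?b m (Bar n) = RR 0 * (fps_const (Q (g1 (Bar n))) * (fps_X * PP n g2 (m - dl (Bar n))))
     + fps_const (Q (g1 (Bar n))) * fps_const (Q (H n (Bar n) (U n) + H n ?b (Bar n))) * (fps_X * (fps_X * (RR 0 * PP n g2 m)))"
  proof (rule seg1corr)
    show "m - dl (Bar n) - dl (U n) = m" by (rule dl_cancel)
  qed (use n2 bB k2 kn in \<open>auto simp: H_rk ee_rk Ind_B g0_def g1_def g2_def eqU\<close>)
  have S4: "Tm n ?b m (U 1) = RR 1 * (fps_const (Q (g3 (U 1))) * (fps_X * PP n g4 (m - dl (U 1))))
     + fps_const (Q (g3 (U 1))) * fps_const (Q (H n (U 1) (Bar 1) + H n ?b (U 1))) * (fps_X * (fps_X * (RR 1 * PP n g4 m)))"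
  proof (rule seg1corr)
    show "m - dl (U 1) - dl (Bar 1) = m" by (rule dl_cancel)
  qed (use n2 bB k2 kn in \<open>auto simp: H_rk ee_rk Ind_B g0_def g1_def g2_def g3_def g4_def eqBar\<close>)
  have L: "FF n ?b m = RR 0 * PP n g0 m" using ee_vals(2)[OF n2 k2 kn] by (simp add: FF_def g0_def)
  have L2: "sc 1 (FF n ?b m) = RR 2 * PP n g5 m"
  proof -
    have "PP n (\<lambda>x. H n ?b x + 1) m = PP n g5 m"
      by (rule PP_cong) (use n2 bB k2 kn in \<open>auto simp: H_rk Ind_B g0_def g1_def g2_def g3_def g4_def g5_def dest: rk_range\<close>)
    then show ?thesis using ee_vals(2)[OF n2 k2 kn] by (simp add: sc_FF)
  qed
  have v1: "g1 (Bar n) = 0" "H n (Bar n) (U n) + H n ?b (Bar n) = 0" "g3 (U 1) = 1" "H n (U 1) (Bar 1) + H n ?b (U 1) = 0"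
    using n2 bB k2 kn by (auto simp: H_rk Ind_B g0_def g1_def g2_def g3_def)
  have S2': "S g1 n (n+1) = fps_X * PP n g2 (m - dl (Bar n))"
  proof -
    have "{n<..n+1} = {n+1}" by auto
    then show ?thesis unfolding S_def using Ln1 v1 by (simp add: g2_def)
  qed
  have S4': "S g3 0 1 = fps_const (Q 1) * (fps_X * PP n g4 (m - dl (U 1)))"
  proof -
    have "{0<..1::nat} = {1}" by auto
    then show ?thesis unfolding S_def using L1 v1 by (simp add: g4_def)
  qed
  have R0: "RR 0 = RR 1 + fps_X * (fps_X * RR 0)" using rstep[of 0] by (simp add: power2_eq_square mult.assoc)
  have R1: "RR 1 = RR 2 + fps_const (Q 1) * (fps_X * (fps_X * RR 1))" using rstep[of 1] by (simp add: power2_eq_square mult.assoc)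
  have E1: "RR 0 * PP n g0 m = RR 0 * S g0 k n + RR 0 * S g1 n (n+1) + RR 0 * PP n g2 m"
    unfolding T1 T2 by (simp add: algebra_simps)
  have E2: "RR 0 * PP n g2 m = RR 1 * PP n g2 m + fps_X * (fps_X * (RR 0 * PP n g2 m))"
  proof -
    have "RR 0 * PP n g2 m = (RR 1 + fps_X * (fps_X * RR 0)) * PP n g2 m"
      by (rule arg_cong[where f="\<lambda>z. z * PP n g2 m", OF R0])
    also have "\<dots> = RR 1 * PP n g2 m + fps_X * (fps_X * (RR 0 * PP n g2 m))" by (simp only: algebra_simps)
    finally show ?thesis .
  qed
  have E3: "RR 1 * PP n g2 m = RR 1 * S g2 (n+1) (2*n) + RR 1 * S g3 0 1 + RR 1 * PP n g4 m"
    unfolding T3 T4 by (simp add: algebra_simps)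
  have E4: "RR 1 * PP n g4 m = RR 2 * PP n g4 m + fps_const (Q 1) * (fps_X * (fps_X * (RR 1 * PP n g4 m)))"
  proof -
    have "RR 1 * PP n g4 m = (RR 2 + fps_const (Q 1) * (fps_X * (fps_X * RR 1))) * PP n g4 m"
      by (rule arg_cong[where f="\<lambda>z. z * PP n g4 m", OF R1])
    also have "\<dots> = RR 2 * PP n g4 m + fps_const (Q 1) * (fps_X * (fps_X * (RR 1 * PP n g4 m)))" by (simp only: algebra_simps)
    finally show ?thesis .
  qed
  have E5: "RR 2 * PP n g4 m = RR 2 * PP n g5 m + RR 2 * S g4 1 k"
    unfolding T5 by (simp add: algebra_simps)
  have "FF n ?b m - sc 1 (FF n ?b m) = RR 0 * PP n g0 m - RR 2 * PP n g5 m" by (subst L2, subst L, rule refl)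
  also have "\<dots> = RR 0 * S g0 k n + RR 0 * S g1 n (n+1) + fps_X * (fps_X * (RR 0 * PP n g2 m))
      + RR 1 * S g2 (n+1) (2*n) + RR 1 * S g3 0 1 + fps_const (Q 1) * (fps_X * (fps_X * (RR 1 * PP n g4 m)))
      + RR 2 * S g4 1 k"
    by (rule lin5[OF E1 E2 E3 E4 E5])
  also have "\<dots> = (\<Sum>c\<in>Bset n. Tm n ?b m c)"
    unfolding R S1 S3 S5 S2 S4 S2' S4' v1 by (simp add: algebra_simps)
  finally show ?thesis .
qed




lemma FE_Bark:
  assumes n4: "n \<ge> 4" and k1: "1 \<le> k" and kn: "k < n"
  shows "FF n (Bar k) m - sc 1 (FF n (Bar k) m) = (\<Sum>c\<in>Bset n. Tm n (Bar k) m c)"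
proof -
  let ?b = "Bar k"
  define \<rho> where "\<rho> = 2 * n + 1 - k"
  have n2: "n \<ge> 2" using n4 by simp
  have bB: "?b \<in> Bset n" using k1 kn by simp
  have rkb: "rk n ?b = \<rho>" by (simp add: \<rho>_def)
  have \<rho>1: "n + 1 < \<rho>" "\<rho> \<le> 2 * n" using k1 kn by (auto simp: \<rho>_def)
  define g0 where "g0 = H n ?b"
  define g1 where "g1 = (\<lambda>x. g0 x + Ind n \<rho> (2*n) x)"
  define g2 where "g2 = (\<lambda>x. g1 x + Ind n 0 1 x)"
  define g3 where "g3 = (\<lambda>x. g2 x + Ind n 1 n x)"
  define g4 where "g4 = (\<lambda>x. g3 x + Ind n n (n+1) x)"
  define g5 where "g5 = (\<lambda>x. g4 x + Ind n (n+1) \<rho> x)"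
  define S where "S g lo hi = (\<Sum>r\<in>{lo<..hi}. fps_const (Q (g (Lr n r))) * (fps_X * PP n (\<lambda>x. g x + Ind n lo r x) (m - dl (Lr n r))))" for g lo hi
  have T1: "PP n g0 m = PP n g1 m + S g0 \<rho> (2*n)" unfolding g1_def S_def by (rule TL) (use \<rho>1 in auto)
  have T2: "PP n g1 m = PP n g2 m + S g1 0 1" unfolding g2_def S_def by (rule TL) (use n4 in auto)
  have T3: "PP n g2 m = PP n g3 m + S g2 1 n" unfolding g3_def S_def by (rule TL) (use n4 in auto)
  have T4: "PP n g3 m = PP n g4 m + S g3 n (n+1)" unfolding g4_def S_def by (rule TL) (use n4 in auto)
  have T5: "PP n g4 m = PP n g5 m + S g4 (n+1) \<rho>" unfolding g5_def S_def by (rule TL) (use \<rho>1 in auto)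
  have Ln1: "Lr n (n+1) = Bar n" by (simp add: Lr_def)
  have L1: "Lr n 1 = U 1" using n4 by (simp add: Lr_def)
  have R: "(\<Sum>c\<in>Bset n. Tm n ?b m c) = Tm n ?b m (U 1) + (\<Sum>r\<in>{1<..n}. Tm n ?b m (Lr n r))
      + Tm n ?b m (Bar n) + (\<Sum>r\<in>{n+1<..\<rho>}. Tm n ?b m (Lr n r)) + (\<Sum>r\<in>{\<rho><..2*n}. Tm n ?b m (Lr n r))"
  proof -
    have "{1..2*n} = {0<..2*n}" by auto
    then have "(\<Sum>c\<in>Bset n. Tm n ?b m c) = (\<Sum>r\<in>{0<..2*n}. Tm n ?b m (Lr n r))" by (simp add: sum_Bset_rk)
    also have "\<dots> = (\<Sum>r\<in>{0<..1}. Tm n ?b m (Lr n r)) + (\<Sum>r\<in>{1<..n}. Tm n ?b m (Lr n r))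
        + (\<Sum>r\<in>{n<..n+1}. Tm n ?b m (Lr n r)) + (\<Sum>r\<in>{n+1<..\<rho>}. Tm n ?b m (Lr n r)) + (\<Sum>r\<in>{\<rho><..2*n}. Tm n ?b m (Lr n r))"
    proof -
      let ?f = "\<lambda>r. Tm n ?b m (Lr n r)"
      have a: "sum ?f {0<..2*n} = sum ?f {0<..1} + sum ?f {1<..2*n}" by (rule sum_gAM_split) (use n4 in auto)
      have b: "sum ?f {1<..2*n} = sum ?f {1<..n} + sum ?f {n<..2*n}" by (rule sum_gAM_split) (use n4 in auto)
      have c: "sum ?f {n<..2*n} = sum ?f {n<..n+1} + sum ?f {n+1<..2*n}" by (rule sum_gAM_split) (use n4 in auto)
      have d: "sum ?f {n+1<..2*n} = sum ?f {n+1<..\<rho>} + sum ?f {\<rho><..2*n}" by (rule sum_gAM_split) (use \<rho>1 in auto)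
      show ?thesis unfolding a b c d by (simp only: add.assoc)
    qed
    also have "(\<Sum>r\<in>{0<..1}. Tm n ?b m (Lr n r)) = Tm n ?b m (U 1)"
    proof -
      have "{0<..1::nat} = {1}" by auto
      then show ?thesis using L1 by simp
    qed
    also have "(\<Sum>r\<in>{n<..n+1}. Tm n ?b m (Lr n r)) = Tm n ?b m (Bar n)"
    proof -
      have "{n<..n+1} = {n+1}" by auto
      then show ?thesis using Ln1 by simp
    qed
    finally show ?thesis .
  qed
  have SA: "(\<Sum>r\<in>{\<rho><..2*n}. Tm n ?b m (Lr n r)) = RR 1 * S g0 \<rho> (2*n)"
    unfolding S_def by (rule seg') (use n2 bB k1 kn rkb \<rho>1 in \<open>auto simp: H_rk ee_rk Ind_B g0_def\<close>)
  have SC: "(\<Sum>r\<in>{1<..n}. Tm n ?b m (Lr n r)) = RR 2 * S g2 1 n"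
    unfolding S_def by (rule seg') (use n2 bB k1 kn rkb \<rho>1 in \<open>auto simp: H_rk ee_rk Ind_B g0_def g1_def g2_def\<close>)
  have SE: "(\<Sum>r\<in>{n+1<..\<rho>}. Tm n ?b m (Lr n r)) = RR 3 * S g4 (n+1) \<rho>"
    unfolding S_def by (rule seg') (use n2 bB k1 kn rkb \<rho>1 in \<open>auto simp: H_rk ee_rk Ind_B g0_def g1_def g2_def g3_def g4_def\<close>)
  have SB: "Tm n ?b m (U 1) = RR 1 * (fps_const (Q (g1 (U 1))) * (fps_X * PP n g2 (m - dl (U 1))))
     + fps_const (Q (g1 (U 1))) * fps_const (Q (H n (U 1) (Bar 1) + H n ?b (U 1))) * (fps_X * (fps_X * (RR 1 * PP n g2 m)))"
  proof (rule seg1corr)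
    show "m - dl (U 1) - dl (Bar 1) = m" by (rule dl_cancel)
  qed (use n2 bB k1 kn rkb \<rho>1 in \<open>auto simp: H_rk ee_rk Ind_B g0_def g1_def g2_def eqBar\<close>)
  have SD: "Tm n ?b m (Bar n) = RR 2 * (fps_const (Q (g3 (Bar n))) * (fps_X * PP n g4 (m - dl (Bar n))))
     + fps_const (Q (g3 (Bar n))) * fps_const (Q (H n (Bar n) (U n) + H n ?b (Bar n))) * (fps_X * (fps_X * (RR 2 * PP n g4 m)))"
  proof (rule seg1corr)
    show "m - dl (Bar n) - dl (U n) = m" by (rule dl_cancel)
  qed (use n2 bB k1 kn rkb \<rho>1 in \<open>auto simp: H_rk ee_rk Ind_B g0_def g1_def g2_def g3_def g4_def eqU\<close>)
  have L: "FF n ?b m = RR 1 * PP n g0 m" using ee_vals(4)[OF n2 k1 kn] by (simp add: FF_def g0_def)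
  have L2: "sc 1 (FF n ?b m) = RR 3 * PP n g5 m"
  proof -
    have "PP n (\<lambda>x. H n ?b x + 1) m = PP n g5 m"
      by (rule PP_cong) (use n2 bB k1 kn rkb \<rho>1 in \<open>auto simp: H_rk Ind_B g0_def g1_def g2_def g3_def g4_def g5_def dest: rk_range\<close>)
    then show ?thesis using ee_vals(4)[OF n2 k1 kn] by (simp add: sc_FF)
  qed
  have v1: "g1 (U 1) = 1" "H n (U 1) (Bar 1) + H n ?b (U 1) = 0" "g3 (Bar n) = 1" "H n (Bar n) (U n) + H n ?b (Bar n) = 1"
    using n2 bB k1 kn rkb \<rho>1 by (auto simp: H_rk Ind_B g0_def g1_def g2_def g3_def)
  have SB': "S g1 0 1 = fps_const (Q 1) * (fps_X * PP n g2 (m - dl (U 1)))"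
  proof -
    have "{0<..1::nat} = {1}" by auto
    then show ?thesis unfolding S_def using L1 v1 by (simp add: g2_def)
  qed
  have SD': "S g3 n (n+1) = fps_const (Q 1) * (fps_X * PP n g4 (m - dl (Bar n)))"
  proof -
    have "{n<..n+1} = {n+1}" by auto
    then show ?thesis unfolding S_def using Ln1 v1 by (simp add: g4_def)
  qed
  have R1: "RR 1 = RR 2 + fps_const (Q 1) * (fps_X * (fps_X * RR 1))" using rstep[of 1] by (simp add: power2_eq_square mult.assoc)
  have R2: "RR 2 = RR 3 + fps_const (Q 2) * (fps_X * (fps_X * RR 2))" using rstep[of 2] by (simp add: power2_eq_square mult.assoc)
  have E1: "RR 1 * PP n g0 m = RR 1 * S g0 \<rho> (2*n) + RR 1 * S g1 0 1 + RR 1 * PP n g2 m"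
    unfolding T1 T2 by (simp add: algebra_simps)
  have E2: "RR 1 * PP n g2 m = RR 2 * PP n g2 m + fps_const (Q 1) * (fps_X * (fps_X * (RR 1 * PP n g2 m)))"
  proof -
    have "RR 1 * PP n g2 m = (RR 2 + fps_const (Q 1) * (fps_X * (fps_X * RR 1))) * PP n g2 m"
      by (rule arg_cong[where f="\<lambda>z. z * PP n g2 m", OF R1])
    also have "\<dots> = RR 2 * PP n g2 m + fps_const (Q 1) * (fps_X * (fps_X * (RR 1 * PP n g2 m)))" by (simp only: algebra_simps)
    finally show ?thesis .
  qed
  have E3: "RR 2 * PP n g2 m = RR 2 * S g2 1 n + RR 2 * S g3 n (n+1) + RR 2 * PP n g4 m"
    unfolding T3 T4 by (simp add: algebra_simps)
  have E4: "RR 2 * PP n g4 m = RR 3 * PP n g4 m + fps_const (Q 2) * (fps_X * (fps_X * (RR 2 * PP n g4 m)))"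
  proof -
    have "RR 2 * PP n g4 m = (RR 3 + fps_const (Q 2) * (fps_X * (fps_X * RR 2))) * PP n g4 m"
      by (rule arg_cong[where f="\<lambda>z. z * PP n g4 m", OF R2])
    also have "\<dots> = RR 3 * PP n g4 m + fps_const (Q 2) * (fps_X * (fps_X * (RR 2 * PP n g4 m)))" by (simp only: algebra_simps)
    finally show ?thesis .
  qed
  have E5: "RR 3 * PP n g4 m = RR 3 * PP n g5 m + RR 3 * S g4 (n+1) \<rho>"
    unfolding T5 by (simp add: algebra_simps)
  have QQ: "Q 1 * Q 1 = Q 2" by (rule Q2) simp
  have "FF n ?b m - sc 1 (FF n ?b m) = RR 1 * PP n g0 m - RR 3 * PP n g5 m" by (subst L2, subst L, rule refl)
  also have "\<dots> = RR 1 * S g0 \<rho> (2*n) + RR 1 * S g1 0 1 + fps_const (Q 1) * (fps_X * (fps_X * (RR 1 * PP n g2 m)))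
      + RR 2 * S g2 1 n + RR 2 * S g3 n (n+1) + fps_const (Q 2) * (fps_X * (fps_X * (RR 2 * PP n g4 m)))
      + RR 3 * S g4 (n+1) \<rho>"
    by (rule lin5[OF E1 E2 E3 E4 E5])
  also have "\<dots> = (\<Sum>c\<in>Bset n. Tm n ?b m c)"
    unfolding R SA SC SE SB SD SB' SD' v1 by (simp add: algebra_simps QQ)
  finally show ?thesis .
qed




lemma lin5b:
  fixes P0 :: "'a::ab_group_add"
  shows "P0 = A + P1 \<Longrightarrow> P1 = P1' + X1 \<Longrightarrow> P1' = B + C + P3 \<Longrightarrow> P3 = P3' + X3 \<Longrightarrow> P3' = D + E + P5
    \<Longrightarrow> P0 - P5 = A + X1 + B + C + X3 + D + E"
  by (simp add: algebra_simps)

lemma FE_U1: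
  assumes n4: "n \<ge> 4"
  shows "FF n (U 1) m - sc 1 (FF n (U 1) m) = (\<Sum>c\<in>Bset n. Tm n (U 1) m c)"
proof -
  let ?b = "U 1"
  have n2: "n \<ge> 2" using n4 by simp
  have bB: "?b \<in> Bset n" using n4 by simp
  have rkb: "rk n ?b = 1" by simp
  define g0 where "g0 = H n ?b"
  define g1 where "g1 = (\<lambda>x. g0 x + Ind n (2*n-1) (2*n) x)"
  define g2 where "g2 = (\<lambda>x. g1 x + Ind n 1 n x)"
  define g3 where "g3 = (\<lambda>x. g2 x + Ind n n (n+1) x)"
  define g4 where "g4 = (\<lambda>x. g3 x + Ind n (n+1) (2*n-1) x)"
  define g5 where "g5 = (\<lambda>x. g4 x + Ind n 0 1 x)"
  define S where "S g lo hi = (\<Sum>r\<in>{lo<..hi}. fps_const (Q (g (Lr n r))) * (fps_X * PP n (\<lambda>x. g x + Ind n lo r x) (m - dl (Lr n r))))" for g lo hi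
  have T1: "PP n g0 m = PP n g1 m + S g0 (2*n-1) (2*n)" unfolding g1_def S_def by (rule TL) (use n4 in auto)
  have T2: "PP n g1 m = PP n g2 m + S g1 1 n" unfolding g2_def S_def by (rule TL) (use n4 in auto)
  have T3: "PP n g2 m = PP n g3 m + S g2 n (n+1)" unfolding g3_def S_def by (rule TL) (use n4 in auto)
  have T4: "PP n g3 m = PP n g4 m + S g3 (n+1) (2*n-1)" unfolding g4_def S_def by (rule TL) (use n4 in auto)
  have T5: "PP n g4 m = PP n g5 m + S g4 0 1" unfolding g5_def S_def by (rule TL) (use n4 in auto)
  have Ln1: "Lr n (n+1) = Bar n" by (simp add: Lr_def)
  have L2n: "Lr n (2*n) = Bar 1" using n4 by (simp add: Lr_def)
  have R: "(\<Sum>c\<in>Bset n. Tm n ?b m c) = (\<Sum>r\<in>{0<..1}. Tm n ?b m (Lr n r)) + (\<Sum>r\<in>{1<..n}. Tm n ?b m (Lr n r))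
      + Tm n ?b m (Bar n) + (\<Sum>r\<in>{n+1<..2*n-1}. Tm n ?b m (Lr n r)) + Tm n ?b m (Bar 1)"
  proof -
    have "{1..2*n} = {0<..2*n}" by auto
    then have "(\<Sum>c\<in>Bset n. Tm n ?b m c) = (\<Sum>r\<in>{0<..2*n}. Tm n ?b m (Lr n r))" by (simp add: sum_Bset_rk)
    also have "\<dots> = (\<Sum>r\<in>{0<..1}. Tm n ?b m (Lr n r)) + (\<Sum>r\<in>{1<..n}. Tm n ?b m (Lr n r))
        + (\<Sum>r\<in>{n<..n+1}. Tm n ?b m (Lr n r)) + (\<Sum>r\<in>{n+1<..2*n-1}. Tm n ?b m (Lr n r)) + (\<Sum>r\<in>{2*n-1<..2*n}. Tm n ?b m (Lr n r))"
    proof -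
      let ?f = "\<lambda>r. Tm n ?b m (Lr n r)"
      have a: "sum ?f {0<..2*n} = sum ?f {0<..1} + sum ?f {1<..2*n}" by (rule sum_gAM_split) (use n4 in auto)
      have b: "sum ?f {1<..2*n} = sum ?f {1<..n} + sum ?f {n<..2*n}" by (rule sum_gAM_split) (use n4 in auto)
      have c: "sum ?f {n<..2*n} = sum ?f {n<..n+1} + sum ?f {n+1<..2*n}" by (rule sum_gAM_split) (use n4 in auto)
      have d: "sum ?f {n+1<..2*n} = sum ?f {n+1<..2*n-1} + sum ?f {2*n-1<..2*n}" by (rule sum_gAM_split) (use n4 in auto)
      show ?thesis unfolding a b c d by (simp only: add.assoc)
    qed
    also have "(\<Sum>r\<in>{n<..n+1}. Tm n ?b m (Lr n r)) = Tm n ?b m (Bar n)"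
    proof -
      have "{n<..n+1} = {n+1}" by auto
      then show ?thesis using Ln1 by simp
    qed
    also have "(\<Sum>r\<in>{2*n-1<..2*n}. Tm n ?b m (Lr n r)) = Tm n ?b m (Bar 1)"
    proof -
      have "{2*n-1<..2*n} = {2*n}" using n4 by auto
      then show ?thesis using L2n by simp
    qed
    finally show ?thesis .
  qed
  have SB: "(\<Sum>r\<in>{1<..n}. Tm n ?b m (Lr n r)) = RR 0 * S g1 1 n"
    unfolding S_def by (rule seg') (use n2 bB rkb in \<open>auto simp: H_rk ee_rk Ind_B g0_def g1_def\<close>)
  have SD: "(\<Sum>r\<in>{n+1<..2*n-1}. Tm n ?b m (Lr n r)) = RR 1 * S g3 (n+1) (2*n-1)"
    unfolding S_def by (rule seg') (use n2 bB rkb in \<open>auto simp: H_rk ee_rk Ind_B g0_def g1_def g2_def g3_def\<close>)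
  have SE: "(\<Sum>r\<in>{0<..1}. Tm n ?b m (Lr n r)) = RR 1 * S g4 0 1"
    unfolding S_def by (rule seg') (use n2 bB rkb in \<open>auto simp: H_rk ee_rk Ind_B g0_def g1_def g2_def g3_def g4_def\<close>)
  have SA: "Tm n ?b m (Bar 1) = RR (-1) * (fps_const (Q (g0 (Bar 1))) * (fps_X * PP n g1 (m - dl (Bar 1))))
     + fps_const (Q (g0 (Bar 1))) * fps_const (Q (H n (Bar 1) (U 1) + H n ?b (Bar 1))) * (fps_X * (fps_X * (RR (-1) * PP n g1 m)))"
  proof (rule seg1corr)
    show "m - dl (Bar 1) - dl (U 1) = m" by (rule dl_cancel)
  qed (use n2 bB rkb in \<open>auto simp: H_rk ee_rk Ind_B g0_def g1_def eqU\<close>)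
  have SC: "Tm n ?b m (Bar n) = RR 0 * (fps_const (Q (g2 (Bar n))) * (fps_X * PP n g3 (m - dl (Bar n))))
     + fps_const (Q (g2 (Bar n))) * fps_const (Q (H n (Bar n) (U n) + H n ?b (Bar n))) * (fps_X * (fps_X * (RR 0 * PP n g3 m)))"
  proof (rule seg1corr)
    show "m - dl (Bar n) - dl (U n) = m" by (rule dl_cancel)
  qed (use n2 bB rkb in \<open>auto simp: H_rk ee_rk Ind_B g0_def g1_def g2_def g3_def eqU\<close>)
  have L: "FF n ?b m = RR (-1) * PP n g0 m" using ee_vals(1)[OF n2] by (simp add: FF_def g0_def)
  have L2: "sc 1 (FF n ?b m) = RR 1 * PP n g5 m"
  proof -
    have "PP n (\<lambda>x. H n ?b x + 1) m = PP n g5 m"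
      by (rule PP_cong) (use n2 bB rkb in \<open>auto simp: H_rk Ind_B g0_def g1_def g2_def g3_def g4_def g5_def dest: rk_range\<close>)
    then show ?thesis using ee_vals(1)[OF n2] by (simp add: sc_FF)
  qed
  have v1: "g0 (Bar 1) = -1" "H n (Bar 1) (U 1) + H n ?b (Bar 1) = 0" "g2 (Bar n) = 0" "H n (Bar n) (U n) + H n ?b (Bar n) = 0"
    using n2 bB rkb by (auto simp: H_rk Ind_B g0_def g1_def g2_def)
  have SA': "S g0 (2*n-1) (2*n) = fps_const (Q (-1)) * (fps_X * PP n g1 (m - dl (Bar 1)))"
  proof -
    have "{2*n-1<..2*n} = {2*n}" using n4 by auto
    then show ?thesis unfolding S_def using L2n v1 by (simp add: g1_def)
  qed
  have SC': "S g2 n (n+1) = fps_X * PP n g3 (m - dl (Bar n))"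
  proof -
    have "{n<..n+1} = {n+1}" by auto
    then show ?thesis unfolding S_def using Ln1 v1 by (simp add: g3_def)
  qed
  have Rm: "RR (-1) = RR 0 + fps_const (Q (-1)) * (fps_X * (fps_X * RR (-1)))" using rstep[of "-1"] by (simp add: power2_eq_square mult.assoc)
  have R0: "RR 0 = RR 1 + fps_X * (fps_X * RR 0)" using rstep[of 0] by (simp add: power2_eq_square mult.assoc)
  have E1: "RR (-1) * PP n g0 m = RR (-1) * S g0 (2*n-1) (2*n) + RR (-1) * PP n g1 m"
    unfolding T1 by (simp add: algebra_simps)
  have E2: "RR (-1) * PP n g1 m = RR 0 * PP n g1 m + fps_const (Q (-1)) * (fps_X * (fps_X * (RR (-1) * PP n g1 m)))"
  proof -
    have "RR (-1) * PP n g1 m = (RR 0 + fps_const (Q (-1)) * (fps_X * (fps_X * RR (-1)))) * PP n g1 m"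
      by (rule arg_cong[where f="\<lambda>z. z * PP n g1 m", OF Rm])
    also have "\<dots> = RR 0 * PP n g1 m + fps_const (Q (-1)) * (fps_X * (fps_X * (RR (-1) * PP n g1 m)))" by (simp only: algebra_simps)
    finally show ?thesis .
  qed
  have E3: "RR 0 * PP n g1 m = RR 0 * S g1 1 n + RR 0 * S g2 n (n+1) + RR 0 * PP n g3 m"
    unfolding T2 T3 by (simp add: algebra_simps)
  have E4: "RR 0 * PP n g3 m = RR 1 * PP n g3 m + fps_X * (fps_X * (RR 0 * PP n g3 m))"
  proof -
    have "RR 0 * PP n g3 m = (RR 1 + fps_X * (fps_X * RR 0)) * PP n g3 m"
      by (rule arg_cong[where f="\<lambda>z. z * PP n g3 m", OF R0])
    also have "\<dots> = RR 1 * PP n g3 m + fps_X * (fps_X * (RR 0 * PP n g3 m))" by (simp only: algebra_simps)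
    finally show ?thesis .
  qed
  have E5: "RR 1 * PP n g3 m = RR 1 * S g3 (n+1) (2*n-1) + RR 1 * S g4 0 1 + RR 1 * PP n g5 m"
    unfolding T4 T5 by (simp add: algebra_simps)
  have "FF n ?b m - sc 1 (FF n ?b m) = RR (-1) * PP n g0 m - RR 1 * PP n g5 m" by (subst L2, subst L, rule refl)
  also have "\<dots> = RR (-1) * S g0 (2*n-1) (2*n) + fps_const (Q (-1)) * (fps_X * (fps_X * (RR (-1) * PP n g1 m)))
      + RR 0 * S g1 1 n + RR 0 * S g2 n (n+1) + fps_X * (fps_X * (RR 0 * PP n g3 m))
      + RR 1 * S g3 (n+1) (2*n-1) + RR 1 * S g4 0 1"
    by (rule lin5b[OF E1 E2 E3 E4 E5])
  also have "\<dots> = (\<Sum>c\<in>Bset n. Tm n ?b m c)"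
    unfolding R SA SB SC SD SE SA' SC' v1 by (simp add: algebra_simps)
  finally show ?thesis .
qed

lemma FE_Barn:
  assumes n4: "n \<ge> 4"
  shows "FF n (Bar n) m - sc 1 (FF n (Bar n) m) = (\<Sum>c\<in>Bset n. Tm n (Bar n) m c)"
proof -
  let ?b = "Bar n"
  have n2: "n \<ge> 2" using n4 by simp
  have bB: "?b \<in> Bset n" using n4 by simp
  have rkb: "rk n ?b = n + 1" by simp
  define g0 where "g0 = H n ?b"
  define g1 where "g1 = (\<lambda>x. g0 x + Ind n (n-1) n x)"
  define g2 where "g2 = (\<lambda>x. g1 x + Ind n (n+1) (2*n) x)"
  define g3 where "g3 = (\<lambda>x. g2 x + Ind n 0 1 x)"
  define g4 where "g4 = (\<lambda>x. g3 x + Ind n 1 (n-1) x)"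
  define g5 where "g5 = (\<lambda>x. g4 x + Ind n n (n+1) x)"
  define S where "S g lo hi = (\<Sum>r\<in>{lo<..hi}. fps_const (Q (g (Lr n r))) * (fps_X * PP n (\<lambda>x. g x + Ind n lo r x) (m - dl (Lr n r))))" for g lo hi
  have T1: "PP n g0 m = PP n g1 m + S g0 (n-1) n" unfolding g1_def S_def by (rule TL) (use n4 in auto)
  have T2: "PP n g1 m = PP n g2 m + S g1 (n+1) (2*n)" unfolding g2_def S_def by (rule TL) (use n4 in auto)
  have T3: "PP n g2 m = PP n g3 m + S g2 0 1" unfolding g3_def S_def by (rule TL) (use n4 in auto)
  have T4: "PP n g3 m = PP n g4 m + S g3 1 (n-1)" unfolding g4_def S_def by (rule TL) (use n4 in auto)
  have T5: "PP n g4 m = PP n g5 m + S g4 n (n+1)" unfolding g5_def S_def by (rule TL) (use n4 in auto)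
  have Lnn: "Lr n n = U n" by (simp add: Lr_def)
  have Ln1: "Lr n (n+1) = Bar n" by (simp add: Lr_def)
  have L1: "Lr n 1 = U 1" using n4 by (simp add: Lr_def)
  have R: "(\<Sum>c\<in>Bset n. Tm n ?b m c) = Tm n ?b m (U 1) + (\<Sum>r\<in>{1<..n-1}. Tm n ?b m (Lr n r))
      + Tm n ?b m (U n) + (\<Sum>r\<in>{n<..n+1}. Tm n ?b m (Lr n r)) + (\<Sum>r\<in>{n+1<..2*n}. Tm n ?b m (Lr n r))"
  proof -
    have "{1..2*n} = {0<..2*n}" by auto
    then have "(\<Sum>c\<in>Bset n. Tm n ?b m c) = (\<Sum>r\<in>{0<..2*n}. Tm n ?b m (Lr n r))" by (simp add: sum_Bset_rk)
    also have "\<dots> = (\<Sum>r\<in>{0<..1}. Tm n ?b m (Lr n r)) + (\<Sum>r\<in>{1<..n-1}. Tm n ?b m (Lr n r))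
        + (\<Sum>r\<in>{n-1<..n}. Tm n ?b m (Lr n r)) + (\<Sum>r\<in>{n<..n+1}. Tm n ?b m (Lr n r)) + (\<Sum>r\<in>{n+1<..2*n}. Tm n ?b m (Lr n r))"
    proof -
      let ?f = "\<lambda>r. Tm n ?b m (Lr n r)"
      have a: "sum ?f {0<..2*n} = sum ?f {0<..1} + sum ?f {1<..2*n}" by (rule sum_gAM_split) (use n4 in auto)
      have b: "sum ?f {1<..2*n} = sum ?f {1<..n-1} + sum ?f {n-1<..2*n}" by (rule sum_gAM_split) (use n4 in auto)
      have c: "sum ?f {n-1<..2*n} = sum ?f {n-1<..n} + sum ?f {n<..2*n}" by (rule sum_gAM_split) (use n4 in auto)
      have d: "sum ?f {n<..2*n} = sum ?f {n<..n+1} + sum ?f {n+1<..2*n}" by (rule sum_gAM_split) (use n4 in auto)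
      show ?thesis unfolding a b c d by (simp only: add.assoc)
    qed
    also have "(\<Sum>r\<in>{0<..1}. Tm n ?b m (Lr n r)) = Tm n ?b m (U 1)"
    proof -
      have "{0<..1::nat} = {1}" by auto
      then show ?thesis using L1 by simp
    qed
    also have "(\<Sum>r\<in>{n-1<..n}. Tm n ?b m (Lr n r)) = Tm n ?b m (U n)"
    proof -
      have "{n-1<..n} = {n}" using n4 by auto
      then show ?thesis using Lnn by simp
    qed
    finally show ?thesis .
  qed
  have SB: "(\<Sum>r\<in>{n+1<..2*n}. Tm n ?b m (Lr n r)) = RR 1 * S g1 (n+1) (2*n)"
    unfolding S_def by (rule seg') (use n2 bB rkb in \<open>auto simp: H_rk ee_rk Ind_B g0_def g1_def\<close>)
  have SD: "(\<Sum>r\<in>{1<..n-1}. Tm n ?b m (Lr n r)) = RR 2 * S g3 1 (n-1)"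
    unfolding S_def
  proof (rule seg')
    show "n - 1 \<le> 2 * n" by simp
  next
    fix r assume r: "1 < r" "r \<le> n - 1" "Lr n r \<in> Bset n" "rk n (Lr n r) = r"
    have Lr: "Lr n r = U r" using r by (simp add: Lr_def)
    have rB: "U r \<in> Bset n" "rk n (U r) = r" using r n4 by auto
    show "ee n (Lr n r) + 2 * H n ?b (Lr n r) = 2" unfolding Lr using n2 r rB by (simp add: H_rk ee_rk)
    show "H n ?b (Lr n r) = g3 (Lr n r)" unfolding Lr using n2 r rB by (simp add: H_rk Ind_B g0_def g1_def g2_def g3_def)
    fix x assume x: "x \<in> Bset n" "1 \<le> rk n x" "rk n x \<le> 2 * n"
    show "H n (Lr n r) x + H n ?b (Lr n r) = g3 x + Ind n 1 r x" unfolding Lr g3_def g2_def g1_def g0_def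
      unfolding H_rk[OF n2 rB(1) x(1)] H_rk[OF n2 bB rB(1)] H_rk[OF n2 bB x(1)] Ind_B[OF x(1)] rB(2) rkb
      using r x n2 by (simp del: rk.simps) presburger
  qed
  have SE: "(\<Sum>r\<in>{n<..n+1}. Tm n ?b m (Lr n r)) = RR 2 * S g4 n (n+1)"
    unfolding S_def
  proof (rule seg')
    show "n + 1 \<le> 2 * n" using n4 by simp
  next
    fix r assume "n < r" "r \<le> n + 1"
    then have r: "r = n + 1" by simp
    show "ee n (Lr n r) + 2 * H n ?b (Lr n r) = 2" unfolding r Ln1 using n2 by (simp add: H_rk ee_rk)
    show "H n ?b (Lr n r) = g4 (Lr n r)" unfolding r Ln1 using n2 by (simp add: H_rk Ind_B g0_def g1_def g2_def g3_def g4_def)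
    fix x assume x: "x \<in> Bset n" "1 \<le> rk n x" "rk n x \<le> 2 * n"
    show "H n (Lr n r) x + H n ?b (Lr n r) = g4 x + Ind n n r x" unfolding r Ln1
      using n2 x by (auto simp add: H_rk Ind_B g0_def g1_def g2_def g3_def g4_def)
  qed
  have SA: "Tm n ?b m (U n) = RR 0 * (fps_const (Q (g0 (U n))) * (fps_X * PP n g1 (m - dl (U n))))
     + fps_const (Q (g0 (U n))) * fps_const (Q (H n (U n) (Bar n) + H n ?b (U n))) * (fps_X * (fps_X * (RR 0 * PP n g1 m)))"
  proof (rule seg1corr)
    show "m - dl (U n) - dl (Bar n) = m" by (rule dl_cancel)
  qed (use n2 bB rkb in \<open>auto simp: H_rk ee_rk Ind_B g0_def g1_def eqBar\<close>)
  have SC: "Tm n ?b m (U 1) = RR 1 * (fps_const (Q (g2 (U 1))) * (fps_X * PP n g3 (m - dl (U 1))))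
     + fps_const (Q (g2 (U 1))) * fps_const (Q (H n (U 1) (Bar 1) + H n ?b (U 1))) * (fps_X * (fps_X * (RR 1 * PP n g3 m)))"
  proof (rule seg1corr)
    show "m - dl (U 1) - dl (Bar 1) = m" by (rule dl_cancel)
  qed (use n2 bB rkb in \<open>auto simp: H_rk ee_rk Ind_B g0_def g1_def g2_def g3_def eqBar\<close>)
  have L: "FF n ?b m = RR 0 * PP n g0 m" using ee_vals(3)[OF n2] by (simp add: FF_def g0_def)
  have L2: "sc 1 (FF n ?b m) = RR 2 * PP n g5 m"
  proof -
    have "PP n (\<lambda>x. H n ?b x + 1) m = PP n g5 m"
      by (rule PP_cong) (use n2 bB rkb in \<open>auto simp: H_rk Ind_B g0_def g1_def g2_def g3_def g4_def g5_def dest: rk_range\<close>)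
    then show ?thesis using ee_vals(3)[OF n2] by (simp add: sc_FF)
  qed
  have v1: "g0 (U n) = 0" "H n (U n) (Bar n) + H n ?b (U n) = 0" "g2 (U 1) = 1" "H n (U 1) (Bar 1) + H n ?b (U 1) = 0"
    using n2 bB rkb by (auto simp: H_rk Ind_B g0_def g1_def g2_def)
  have SA': "S g0 (n-1) n = fps_X * PP n g1 (m - dl (U n))"
  proof -
    have "{n-1<..n} = {n}" using n4 by auto
    then show ?thesis unfolding S_def using Lnn v1 by (simp add: g1_def)
  qed
  have SC': "S g2 0 1 = fps_const (Q 1) * (fps_X * PP n g3 (m - dl (U 1)))"
  proof -
    have "{0<..1::nat} = {1}" by auto
    then show ?thesis unfolding S_def using L1 v1 by (simp add: g3_def)
  qed
  have R0: "RR 0 = RR 1 + fps_X * (fps_X * RR 0)" using rstep[of 0] by (simp add: power2_eq_square mult.assoc)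
  have R1: "RR 1 = RR 2 + fps_const (Q 1) * (fps_X * (fps_X * RR 1))" using rstep[of 1] by (simp add: power2_eq_square mult.assoc)
  have E1: "RR 0 * PP n g0 m = RR 0 * S g0 (n-1) n + RR 0 * PP n g1 m"
    unfolding T1 by (simp add: algebra_simps)
  have E2: "RR 0 * PP n g1 m = RR 1 * PP n g1 m + fps_X * (fps_X * (RR 0 * PP n g1 m))"
  proof -
    have "RR 0 * PP n g1 m = (RR 1 + fps_X * (fps_X * RR 0)) * PP n g1 m"
      by (rule arg_cong[where f="\<lambda>z. z * PP n g1 m", OF R0])
    also have "\<dots> = RR 1 * PP n g1 m + fps_X * (fps_X * (RR 0 * PP n g1 m))" by (simp only: algebra_simps)
    finally show ?thesis .
  qed
  have E3: "RR 1 * PP n g1 m = RR 1 * S g1 (n+1) (2*n) + RR 1 * S g2 0 1 + RR 1 * PP n g3 m"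
    unfolding T2 T3 by (simp add: algebra_simps)
  have E4: "RR 1 * PP n g3 m = RR 2 * PP n g3 m + fps_const (Q 1) * (fps_X * (fps_X * (RR 1 * PP n g3 m)))"
  proof -
    have "RR 1 * PP n g3 m = (RR 2 + fps_const (Q 1) * (fps_X * (fps_X * RR 1))) * PP n g3 m"
      by (rule arg_cong[where f="\<lambda>z. z * PP n g3 m", OF R1])
    also have "\<dots> = RR 2 * PP n g3 m + fps_const (Q 1) * (fps_X * (fps_X * (RR 1 * PP n g3 m)))" by (simp only: algebra_simps)
    finally show ?thesis .
  qed
  have E5: "RR 2 * PP n g3 m = RR 2 * S g3 1 (n-1) + RR 2 * S g4 n (n+1) + RR 2 * PP n g5 m"
    unfolding T4 T5 by (simp add: algebra_simps)
  have "FF n ?b m - sc 1 (FF n ?b m) = RR 0 * PP n g0 m - RR 2 * PP n g5 m" by (subst L2, subst L, rule refl)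
  also have "\<dots> = RR 0 * S g0 (n-1) n + fps_X * (fps_X * (RR 0 * PP n g1 m))
      + RR 1 * S g1 (n+1) (2*n) + RR 1 * S g2 0 1 + fps_const (Q 1) * (fps_X * (fps_X * (RR 1 * PP n g3 m)))
      + RR 2 * S g3 1 (n-1) + RR 2 * S g4 n (n+1)"
    by (rule lin5b[OF E1 E2 E3 E4 E5])
  also have "\<dots> = (\<Sum>c\<in>Bset n. Tm n ?b m c)"
    unfolding R SA SB SC SD SE SA' SC' v1 by (simp add: algebra_simps)
  finally show ?thesis .
qed




definition En :: "nat \<Rightarrow> bel \<Rightarrow> bel list \<Rightarrow> int" where
  "En n b xs = (\<Sum>i = 1..length xs. int i * H n (pathel b xs (i + 1)) (pathel b xs i))"

definition Ls :: "nat \<Rightarrow> nat \<Rightarrow> (nat \<Rightarrow> int) \<Rightarrow> bel list set" where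
  "Ls n j \<mu> = {xs. length xs = j \<and> set xs \<subseteq> Bset n \<and> (\<Sum>x\<leftarrow>xs. wt n x) = \<mu>}"

lemma gfun_eq: "gfun n j b \<mu> = (\<Sum>xs\<in>Ls n j \<mu>. Q (En n b xs))"
  by (simp add: gfun_def Ls_def En_def Q_def)

lemma finite_Ls: "finite (Ls n j \<mu>)"
proof -
  have "Ls n j \<mu> \<subseteq> {xs. set xs \<subseteq> Bset n \<and> length xs = j}" by (auto simp: Ls_def)
  moreover have "finite {xs. set xs \<subseteq> Bset n \<and> length xs = j}" by (rule finite_lists_length_eq) simp
  ultimately show ?thesis by (rule finite_subset)
qed

lemma En_snoc: "En n b (ys @ [c]) = int (Suc (length ys)) * H n b c + En n c ys"
proof -
  let ?j = "length ys"
  have "En n b (ys @ [c]) = (\<Sum>i = 1..Suc ?j. int i * H n (pathel b (ys @ [c]) (i + 1)) (pathel b (ys @ [c]) i))"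
    by (simp add: En_def)
  also have "\<dots> = (\<Sum>i = 1..?j. int i * H n (pathel b (ys @ [c]) (i + 1)) (pathel b (ys @ [c]) i))
      + int (Suc ?j) * H n (pathel b (ys @ [c]) (Suc ?j + 1)) (pathel b (ys @ [c]) (Suc ?j))"
    by simp
  also have "pathel b (ys @ [c]) (Suc ?j + 1) = b" by (simp add: pathel_def)
  also have "pathel b (ys @ [c]) (Suc ?j) = c" by (simp add: pathel_def nth_append)
  also have "(\<Sum>i = 1..?j. int i * H n (pathel b (ys @ [c]) (i + 1)) (pathel b (ys @ [c]) i))
      = (\<Sum>i = 1..?j. int i * H n (pathel c ys (i + 1)) (pathel c ys i))"
  proof (rule sum.cong[OF refl])
    fix i assume i: "i \<in> {1..?j}"
    have a: "pathel b (ys @ [c]) (i + 1) = pathel c ys (i + 1)"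
      using i by (auto simp: pathel_def nth_append)
    have b: "pathel b (ys @ [c]) i = pathel c ys i"
      using i by (auto simp: pathel_def nth_append)
    show "int i * H n (pathel b (ys @ [c]) (i + 1)) (pathel b (ys @ [c]) i) = int i * H n (pathel c ys (i + 1)) (pathel c ys i)"
      unfolding a b ..
  qed
  finally show ?thesis by (simp add: En_def)
qed

lemma Ls_Suc_bij:
  "bij_betw (\<lambda>(c, ys). ys @ [c]) (SIGMA c:Bset n. Ls n j (\<mu> - wt n c)) (Ls n (Suc j) \<mu>)"
proof (rule bij_betw_byWitness[where f' = "\<lambda>xs. (last xs, butlast xs)"])
  show "\<forall>a\<in>SIGMA c:Bset n. Ls n j (\<mu> - wt n c). (\<lambda>xs. (last xs, butlast xs)) ((\<lambda>(c, ys). ys @ [c]) a) = a"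
    by auto
  show "\<forall>a'\<in>Ls n (Suc j) \<mu>. (\<lambda>(c, ys). ys @ [c]) ((\<lambda>xs. (last xs, butlast xs)) a') = a'"
    by (auto simp: Ls_def) (metis append_butlast_last_id length_0_conv nat.distinct(1))
  show "(\<lambda>(c, ys). ys @ [c]) ` (SIGMA c:Bset n. Ls n j (\<mu> - wt n c)) \<subseteq> Ls n (Suc j) \<mu>"
    by (auto simp: Ls_def)
  show "(\<lambda>xs. (last xs, butlast xs)) ` Ls n (Suc j) \<mu> \<subseteq> (SIGMA c:Bset n. Ls n j (\<mu> - wt n c))"
  proof
    fix p assume "p \<in> (\<lambda>xs. (last xs, butlast xs)) ` Ls n (Suc j) \<mu>"
    then obtain xs where xs: "xs \<in> Ls n (Suc j) \<mu>" and p: "p = (last xs, butlast xs)" by auto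
    have ne: "xs \<noteq> []" using xs by (auto simp: Ls_def)
    have dec: "xs = butlast xs @ [last xs]" using ne by simp
    have "(\<Sum>x\<leftarrow>xs. wt n x) = \<mu>" using xs by (simp add: Ls_def)
    then have "(\<Sum>x\<leftarrow>butlast xs. wt n x) + wt n (last xs) = \<mu>"
      by (metis (no_types, lifting) dec map_append sum_list_append list.map(1) list.map(2) sum_list_simps(2) sum_list_simps(1) add_0_right)
    then have s: "(\<Sum>x\<leftarrow>butlast xs. wt n x) = \<mu> - wt n (last xs)" by (simp add: algebra_simps)
    have "last xs \<in> set xs" using ne by simp
    moreover have "set (butlast xs) \<subseteq> set xs" by (rule in_set_butlastD[THEN subsetI[rotated]]) auto
    ultimately show "p \<in> (SIGMA c:Bset n. Ls n j (\<mu> - wt n c))"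
      using xs s p by (auto simp: Ls_def)
  qed
qed

lemma gfun_Suc:
  "gfun n (Suc j) b \<mu> = (\<Sum>c\<in>Bset n. Q (int (Suc j) * H n b c) * gfun n j c (\<mu> - wt n c))"
proof -
  have "gfun n (Suc j) b \<mu> = (\<Sum>xs\<in>Ls n (Suc j) \<mu>. Q (En n b xs))" by (rule gfun_eq)
  also have "\<dots> = (\<Sum>p\<in>(SIGMA c:Bset n. Ls n j (\<mu> - wt n c)). Q (En n b ((\<lambda>(c, ys). ys @ [c]) p)))"
    by (rule sum.reindex_bij_betw[OF Ls_Suc_bij, symmetric])
  also have "\<dots> = (\<Sum>(c, ys)\<in>(SIGMA c:Bset n. Ls n j (\<mu> - wt n c)). Q (En n b (ys @ [c])))"
    by (rule sum.cong) auto
  also have "\<dots> = (\<Sum>c\<in>Bset n. \<Sum>ys\<in>Ls n j (\<mu> - wt n c). Q (En n b (ys @ [c])))"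
    by (rule sum.Sigma[symmetric]) (auto simp: finite_Ls)
  also have "\<dots> = (\<Sum>c\<in>Bset n. \<Sum>ys\<in>Ls n j (\<mu> - wt n c). Q (int (Suc j) * H n b c) * Q (En n c ys))"
  proof (intro sum.cong refl)
    fix c ys assume "ys \<in> Ls n j (\<mu> - wt n c)"
    then have "length ys = j" by (simp add: Ls_def)
    then show "Q (En n b (ys @ [c])) = Q (int (Suc j) * H n b c) * Q (En n c ys)"
      by (simp add: En_snoc Q_add)
  qed
  also have "\<dots> = (\<Sum>c\<in>Bset n. Q (int (Suc j) * H n b c) * gfun n j c (\<mu> - wt n c))"
    by (simp add: gfun_eq sum_distrib_left)
  finally show ?thesis .
qed

lemma gfun_0: "gfun n 0 b \<mu> = (if \<mu> = 0 then 1 else 0)"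
proof -
  have "Ls n 0 \<mu> = (if \<mu> = 0 then {[]} else {})" by (auto simp: Ls_def)
  then show ?thesis by (simp add: gfun_eq En_def)
qed




lemma even_tri: "even (a * (a - 1 :: int))"
  by simp

lemma sum_div2: "finite A \<Longrightarrow> (\<forall>x\<in>A. even (f x :: int)) \<Longrightarrow> (\<Sum>x\<in>A. f x) div 2 = (\<Sum>x\<in>A. f x div 2)"
proof -
  assume fA: "finite A" and ev: "\<forall>x\<in>A. even (f x)"
  have "(\<Sum>x\<in>A. f x) = 2 * (\<Sum>x\<in>A. f x div 2)"
    unfolding sum_distrib_left using ev by (intro sum.cong) auto
  then show ?thesis by simp
qed

lemma tri_int: "a \<ge> 0 \<Longrightarrow> int (nat a * (nat a - 1) div 2) = a * (a - 1) div 2"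
proof -
  assume a: "a \<ge> 0"
  then obtain k where k: "a = int k" by (metis nonneg_eq_int)
  have p: "int (k * (k - 1)) = int k * (int k - 1)" by (cases k) (auto simp: algebra_simps)
  have "int (k * (k - 1) div 2) = int (k * (k - 1)) div int 2" by (rule zdiv_int)
  then show ?thesis using k p by (cases "k = 0") auto
qed

definition dn :: "nat \<Rightarrow> nat \<Rightarrow> (bel \<Rightarrow> int) \<Rightarrow> bel \<Rightarrow> int" where
  "dn s t \<gamma> = (\<lambda>x. if x = U s \<or> x = Bar s then \<gamma> x - int t else \<gamma> x)"

definition up :: "nat \<Rightarrow> nat \<Rightarrow> (bel \<Rightarrow> int) \<Rightarrow> bel \<Rightarrow> int" where
  "up s t \<gamma> = (\<lambda>x. if x = U s \<or> x = Bar s then \<gamma> x + int t else \<gamma> x)"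

lemma prod_pair:
  assumes s: "1 \<le> s" "s \<le> n"
  shows "(\<Prod>x\<in>Bset n. f x) = f (U s) * f (Bar s) * (\<Prod>x\<in>Bset n - {U s, Bar s}. f x)"
proof -
  have "(\<Prod>x\<in>Bset n. f x) = f (U s) * (\<Prod>x\<in>Bset n - {U s}. f x)" using s by (simp add: prod.remove)
  also have "(\<Prod>x\<in>Bset n - {U s}. f x) = f (Bar s) * (\<Prod>x\<in>Bset n - {U s} - {Bar s}. f x)"
    using s by (subst prod.remove[of _ "Bar s"]) auto
  also have "Bset n - {U s} - {Bar s} = Bset n - {U s, Bar s}" by auto
  finally show ?thesis by (simp add: mult.assoc)
qed

lemma per_gamma:
  assumes s: "1 \<le> s" "s \<le> n" and g: "\<gamma> \<in> Gam n m j"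
  shows "qpow ((\<Sum>x\<in>Bset n. \<gamma> x * (\<gamma> x - 1)) div 2 - \<gamma> (U s) * \<gamma> (Bar s) + (\<Sum>x\<in>Bset n. f x * \<gamma> x)) * qmultinom n j \<gamma>
    = qpoch j * (\<Sum>t=0..min (nat (\<gamma> (U s))) (nat (\<gamma> (Bar s))). Q ((f (U s) + f (Bar s) - 1) * int t) / qpoch t * (\<Prod>x\<in>Bset n. lf f (dn s t \<gamma>) x))"
proof -
  have nn: "\<forall>x\<in>Bset n. \<gamma> x \<ge> 0" and sj: "(\<Sum>x\<in>Bset n. \<gamma> x) = int j" using g by (auto simp: Gam_def)
  define a where "a = nat (\<gamma> (U s))"
  define a' where "a' = nat (\<gamma> (Bar s))"
  have ga: "\<gamma> (U s) = int a" "\<gamma> (Bar s) = int a'" using nn s by (auto simp: a_def a'_def)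
  let ?D = "\<Prod>x\<in>Bset n. qpoch (nat (\<gamma> x))"
  have Dnz: "?D \<noteq> 0" by simp
  have qm: "qmultinom n j \<gamma> = qpoch j / ?D" using nn sj by (simp add: qmultinom_def)
  have tri: "(\<Sum>x\<in>Bset n. \<gamma> x * (\<gamma> x - 1)) div 2 = (\<Sum>x\<in>Bset n. int (nat (\<gamma> x) * (nat (\<gamma> x) - 1) div 2))"
  proof -
    have "(\<Sum>x\<in>Bset n. \<gamma> x * (\<gamma> x - 1)) div 2 = (\<Sum>x\<in>Bset n. \<gamma> x * (\<gamma> x - 1) div 2)"
      by (rule sum_div2) auto
    also have "\<dots> = (\<Sum>x\<in>Bset n. int (nat (\<gamma> x) * (nat (\<gamma> x) - 1) div 2))"
    proof (rule sum.cong[OF refl])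
      fix x assume "x \<in> Bset n"
      then have "\<gamma> x \<ge> 0" using nn by auto
      then show "\<gamma> x * (\<gamma> x - 1) div 2 = int (nat (\<gamma> x) * (nat (\<gamma> x) - 1) div 2)"
        by (rule tri_int[symmetric])
    qed
    finally show ?thesis .
  qed
  have plf: "(\<Prod>x\<in>Bset n. lf f \<gamma> x) = Q (\<Sum>x\<in>Bset n. int (nat (\<gamma> x) * (nat (\<gamma> x) - 1) div 2)) * Q (\<Sum>x\<in>Bset n. f x * \<gamma> x) / ?D"
  proof -
    have "(\<Prod>x\<in>Bset n. lf f \<gamma> x) = (\<Prod>x\<in>Bset n. Q (int (nat (\<gamma> x) * (nat (\<gamma> x) - 1) div 2)) * Q (f x * \<gamma> x) / qpoch (nat (\<gamma> x)))"
      by (simp add: lf_def cw_def)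
    also have "\<dots> = (\<Prod>x\<in>Bset n. Q (int (nat (\<gamma> x) * (nat (\<gamma> x) - 1) div 2))) * (\<Prod>x\<in>Bset n. Q (f x * \<gamma> x)) / ?D"
      by (simp add: prod.distrib prod_dividef)
    finally show ?thesis by (simp add: Q_sum)
  qed
  have step1: "qpow ((\<Sum>x\<in>Bset n. \<gamma> x * (\<gamma> x - 1)) div 2 - \<gamma> (U s) * \<gamma> (Bar s) + (\<Sum>x\<in>Bset n. f x * \<gamma> x)) * qmultinom n j \<gamma>
      = qpoch j * (Q (- (int a * int a')) * (\<Prod>x\<in>Bset n. lf f \<gamma> x))"
  proof -
    have "qpow ((\<Sum>x\<in>Bset n. \<gamma> x * (\<gamma> x - 1)) div 2 - \<gamma> (U s) * \<gamma> (Bar s) + (\<Sum>x\<in>Bset n. f x * \<gamma> x))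
       = Q (\<Sum>x\<in>Bset n. int (nat (\<gamma> x) * (nat (\<gamma> x) - 1) div 2)) * Q (- (int a * int a')) * Q (\<Sum>x\<in>Bset n. f x * \<gamma> x)"
      unfolding tri ga Q_def[symmetric] by (simp add: Q_add[symmetric])
    then show ?thesis unfolding qm plf using Dnz by (simp add: field_simps)
  qed
  have rest: "(\<Prod>x\<in>Bset n - {U s, Bar s}. lf f (dn s t \<gamma>) x) = (\<Prod>x\<in>Bset n - {U s, Bar s}. lf f \<gamma> x)" for t
    by (rule prod.cong) (auto simp: dn_def lf_def)
  have lfU: "lf f \<gamma> (U s) = cw a * Q (f (U s) * int a)" and lfB: "lf f \<gamma> (Bar s) = cw a' * Q (f (Bar s) * int a')"
    by (simp_all add: lf_def ga)
  have "Q (- (int a * int a')) * (\<Prod>x\<in>Bset n. lf f \<gamma> x)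
      = SS a a' * Q (f (U s) * int a) * Q (f (Bar s) * int a') * (\<Prod>x\<in>Bset n - {U s, Bar s}. lf f \<gamma> x)"
    unfolding prod_pair[OF s, of "lf f \<gamma>"] lfU lfB core by (simp add: ac_simps)
  also have "\<dots> = (\<Sum>t=0..min a a'. Q ((f (U s) + f (Bar s) - 1) * int t) / qpoch t * (\<Prod>x\<in>Bset n. lf f (dn s t \<gamma>) x))"
    unfolding SS_def sum_distrib_right
  proof (rule sum.cong[OF refl])
    fix t assume t: "t \<in> {0..min a a'}"
    have lU: "lf f (dn s t \<gamma>) (U s) = cw (a - t) * Q (f (U s) * (int a - int t))"
      using t by (simp add: lf_def dn_def ga nat_diff_distrib' of_nat_diff)
    have lB: "lf f (dn s t \<gamma>) (Bar s) = cw (a' - t) * Q (f (Bar s) * (int a' - int t))"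
      using t by (simp add: lf_def dn_def ga nat_diff_distrib' of_nat_diff)
    have qe: "Q (- int t) * Q (f (U s) * int a) * Q (f (Bar s) * int a') =
        Q ((f (U s) + f (Bar s) - 1) * int t) * (Q (f (U s) * (int a - int t)) * Q (f (Bar s) * (int a' - int t)))"
      by (simp add: Q_add[symmetric] algebra_simps)
    show "rr t * cw (a - t) * cw (a' - t) * Q (f (U s) * int a) * Q (f (Bar s) * int a') * (\<Prod>x\<in>Bset n - {U s, Bar s}. lf f \<gamma> x) =
        Q ((f (U s) + f (Bar s) - 1) * int t) / qpoch t * (\<Prod>x\<in>Bset n. lf f (dn s t \<gamma>) x)"
      unfolding prod_pair[OF s, of "lf f (dn s t \<gamma>)"] lU lB rest rr_def
      using qe by (simp add: field_simps)
  qed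
  finally show ?thesis unfolding step1 a_def a'_def by simp
qed




lemma Gam_pair_le:
  assumes s: "1 \<le> s" "s \<le> n" and g: "\<gamma> \<in> Gam n m j"
  shows "\<gamma> (U s) + \<gamma> (Bar s) \<le> int j"
proof -
  have "\<gamma> (U s) + \<gamma> (Bar s) = (\<Sum>x\<in>{U s, Bar s}. \<gamma> x)" by simp
  also have "\<dots> \<le> (\<Sum>x\<in>Bset n. \<gamma> x)"
    by (rule sum_mono2) (use s g in \<open>auto simp: Gam_def\<close>)
  finally show ?thesis using g by (simp add: Gam_def)
qed

lemma sum_pair_ind:
  assumes s: "1 \<le> s" "s \<le> n"
  shows "(\<Sum>x\<in>Bset n. if x = U s \<or> x = Bar s then (v::int) else 0) = 2 * v"
proof -
  have "(\<Sum>x\<in>Bset n. if x = U s \<or> x = Bar s then v else 0) = (\<Sum>x\<in>{U s, Bar s}. if x = U s \<or> x = Bar s then v else 0)"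
    by (rule sum.mono_neutral_right) (use s in auto)
  also have "\<dots> = 2 * v" by simp
  finally show ?thesis .
qed

lemma up_Gam:
  assumes s: "1 \<le> s" "s \<le> n" and t: "2 * t \<le> j"
  shows "up s t ` Gam n m (j - 2 * t) = {\<gamma> \<in> Gam n m j. int t \<le> \<gamma> (U s) \<and> int t \<le> \<gamma> (Bar s)}"
proof (intro equalityI subsetI)
  fix \<gamma> assume "\<gamma> \<in> up s t ` Gam n m (j - 2 * t)"
  then obtain \<gamma>' where g': "\<gamma>' \<in> Gam n m (j - 2 * t)" and ge: "\<gamma> = up s t \<gamma>'" by auto
  have sum: "(\<Sum>x\<in>Bset n. up s t \<gamma>' x) = (\<Sum>x\<in>Bset n. \<gamma>' x) + 2 * int t"
  proof -
    have "(\<Sum>x\<in>Bset n. up s t \<gamma>' x) = (\<Sum>x\<in>Bset n. \<gamma>' x + (if x = U s \<or> x = Bar s then int t else 0))"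
      by (rule sum.cong) (auto simp: up_def)
    also have "\<dots> = (\<Sum>x\<in>Bset n. \<gamma>' x) + (\<Sum>x\<in>Bset n. if x = U s \<or> x = Bar s then int t else 0)"
      by (simp add: sum.distrib)
    also have "(\<Sum>x\<in>Bset n. if x = U s \<or> x = Bar s then int t else 0) = 2 * int t"
      by (rule sum_pair_ind[OF s])
    finally show ?thesis .
  qed
  have p1: "\<forall>x\<in>Bset n. \<gamma> x \<ge> 0" using g' unfolding ge by (auto simp: up_def Gam_def)
  have p2: "\<forall>x. x \<notin> Bset n \<longrightarrow> \<gamma> x = 0" using g' s unfolding ge by (auto simp: up_def Gam_def)
  have p3: "\<forall>i\<in>{1..n}. \<gamma> (U i) - \<gamma> (Bar i) = m i" using g' unfolding ge by (auto simp: up_def Gam_def)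
  have p4: "(\<Sum>x\<in>Bset n. \<gamma> x) = int j" using g' t unfolding ge sum by (simp add: Gam_def of_nat_diff)
  have p5: "int t \<le> \<gamma> (U s)" "int t \<le> \<gamma> (Bar s)" using g' s unfolding ge by (auto simp: up_def Gam_def)
  show "\<gamma> \<in> {\<gamma> \<in> Gam n m j. int t \<le> \<gamma> (U s) \<and> int t \<le> \<gamma> (Bar s)}"
    using p1 p2 p3 p4 p5 by (simp add: Gam_def)
next
  fix \<gamma> assume "\<gamma> \<in> {\<gamma> \<in> Gam n m j. int t \<le> \<gamma> (U s) \<and> int t \<le> \<gamma> (Bar s)}"
  then have g: "\<gamma> \<in> Gam n m j" and tU: "int t \<le> \<gamma> (U s)" and tB: "int t \<le> \<gamma> (Bar s)" by auto
  have sum: "(\<Sum>x\<in>Bset n. dn s t \<gamma> x) = (\<Sum>x\<in>Bset n. \<gamma> x) - 2 * int t"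
  proof -
    have "(\<Sum>x\<in>Bset n. dn s t \<gamma> x) = (\<Sum>x\<in>Bset n. \<gamma> x - (if x = U s \<or> x = Bar s then int t else 0))"
      by (rule sum.cong) (auto simp: dn_def)
    also have "\<dots> = (\<Sum>x\<in>Bset n. \<gamma> x) - (\<Sum>x\<in>Bset n. if x = U s \<or> x = Bar s then int t else 0)"
      by (simp add: sum_subtractf)
    also have "(\<Sum>x\<in>Bset n. if x = U s \<or> x = Bar s then int t else 0) = 2 * int t"
      by (rule sum_pair_ind[OF s])
    finally show ?thesis .
  qed
  define \<delta> where "\<delta> = dn s t \<gamma>"
  have p1: "\<forall>x\<in>Bset n. \<delta> x \<ge> 0" using g tU tB unfolding \<delta>_def by (auto simp: dn_def Gam_def)
  have p2: "\<forall>x. x \<notin> Bset n \<longrightarrow> \<delta> x = 0" using g s unfolding \<delta>_def by (auto simp: dn_def Gam_def)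
  have p3: "\<forall>i\<in>{1..n}. \<delta> (U i) - \<delta> (Bar i) = m i" using g unfolding \<delta>_def by (auto simp: dn_def Gam_def)
  have p4: "(\<Sum>x\<in>Bset n. \<delta> x) = int (j - 2 * t)" using g t unfolding \<delta>_def sum by (simp add: Gam_def of_nat_diff)
  have "dn s t \<gamma> \<in> Gam n m (j - 2 * t)"
    using p1 p2 p3 p4 unfolding \<delta>_def by (simp add: Gam_def)
  moreover have "\<gamma> = up s t (dn s t \<gamma>)" by (auto simp: up_def dn_def)
  ultimately show "\<gamma> \<in> up s t ` Gam n m (j - 2 * t)" by blast
qed

lemma RHS_sum:
  assumes s: "1 \<le> s" "s \<le> n"
  shows "(\<Sum>\<gamma>\<in>Gam n m j. \<Sum>t=0..min (nat (\<gamma> (U s))) (nat (\<gamma> (Bar s))). c t * (\<Prod>x\<in>Bset n. lf f (dn s t \<gamma>) x))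
    = (\<Sum>t=0..j div 2. c t * Ph n f m (j - 2 * t))"
proof -
  let ?F = "\<lambda>\<gamma> t. c t * (\<Prod>x\<in>Bset n. lf f (dn s t \<gamma>) x)"
  let ?P = "\<lambda>\<gamma> t. int t \<le> \<gamma> (U s) \<and> int t \<le> \<gamma> (Bar s)"
  have "(\<Sum>\<gamma>\<in>Gam n m j. \<Sum>t=0..min (nat (\<gamma> (U s))) (nat (\<gamma> (Bar s))). ?F \<gamma> t)
      = (\<Sum>\<gamma>\<in>Gam n m j. \<Sum>t=0..j div 2. if ?P \<gamma> t then ?F \<gamma> t else 0)"
  proof (rule sum.cong[OF refl])
    fix \<gamma> assume g: "\<gamma> \<in> Gam n m j"
    have nn: "\<gamma> (U s) \<ge> 0" "\<gamma> (Bar s) \<ge> 0" using g s by (auto simp: Gam_def)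
    have le: "min (nat (\<gamma> (U s))) (nat (\<gamma> (Bar s))) \<le> j div 2"
      using Gam_pair_le[OF s g] nn by linarith
    have "(\<Sum>t=0..j div 2. if ?P \<gamma> t then ?F \<gamma> t else 0) = (\<Sum>t\<in>{t\<in>{0..j div 2}. ?P \<gamma> t}. ?F \<gamma> t)"
      by (rule sum.inter_filter[symmetric]) simp
    also have "{t\<in>{0..j div 2}. ?P \<gamma> t} = {0..min (nat (\<gamma> (U s))) (nat (\<gamma> (Bar s)))}"
      using le nn by auto
    finally show "(\<Sum>t=0..min (nat (\<gamma> (U s))) (nat (\<gamma> (Bar s))). ?F \<gamma> t) = (\<Sum>t=0..j div 2. if ?P \<gamma> t then ?F \<gamma> t else 0)"
      by simp
  qed
  also have "\<dots> = (\<Sum>t=0..j div 2. \<Sum>\<gamma>\<in>Gam n m j. if ?P \<gamma> t then ?F \<gamma> t else 0)"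
    by (rule sum.swap)
  also have "\<dots> = (\<Sum>t=0..j div 2. c t * Ph n f m (j - 2 * t))"
  proof (rule sum.cong[OF refl])
    fix t assume t: "t \<in> {0..j div 2}"
    then have t2: "2 * t \<le> j" by auto
    have "(\<Sum>\<gamma>\<in>Gam n m j. if ?P \<gamma> t then ?F \<gamma> t else 0) = (\<Sum>\<gamma>\<in>{\<gamma> \<in> Gam n m j. ?P \<gamma> t}. ?F \<gamma> t)"
      by (rule sum.inter_filter[symmetric]) simp
    also have "\<dots> = (\<Sum>\<gamma>\<in>up s t ` Gam n m (j - 2 * t). ?F \<gamma> t)"
      unfolding up_Gam[OF s t2] ..
    also have "\<dots> = (\<Sum>\<gamma>\<in>Gam n m (j - 2 * t). ?F (up s t \<gamma>) t)"
    proof (rule sum.reindex_cong[of "up s t"])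
      show "inj_on (up s t) (Gam n m (j - 2 * t))"
        by (auto simp: inj_on_def up_def fun_eq_iff split: if_splits)
    qed auto
    also have "\<dots> = (\<Sum>\<gamma>\<in>Gam n m (j - 2 * t). c t * (\<Prod>x\<in>Bset n. lf f \<gamma> x))"
    proof -
      have "dn s t (up s t \<gamma>) = \<gamma>" for \<gamma> by (auto simp: up_def dn_def)
      then show ?thesis by simp
    qed
    finally show "(\<Sum>\<gamma>\<in>Gam n m j. if ?P \<gamma> t then ?F \<gamma> t else 0) = c t * Ph n f m (j - 2 * t)"
      by (simp add: Ph_def sum_distrib_left)
  qed
  finally show ?thesis .
qed

lemma FF_coeff:
  "(RR e * PP n f m) $ j = (\<Sum>t=0..j div 2. Q (e * int t) / qpoch t * Ph n f m (j - 2 * t))"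
proof -
  have "(RR e * PP n f m) $ j = (\<Sum>i=0..j. (if even i then Q (e * int (i div 2)) / qpoch (i div 2) else 0) * Ph n f m (j - i))"
    by (simp add: fps_mult_nth RR_def PP_def)
  also have "\<dots> = (\<Sum>i=0..j. if even i then Q (e * int (i div 2)) / qpoch (i div 2) * Ph n f m (j - i) else 0)"
    by (rule sum.cong) auto
  also have "\<dots> = (\<Sum>i\<in>{i\<in>{0..j}. even i}. Q (e * int (i div 2)) / qpoch (i div 2) * Ph n f m (j - i))"
    by (rule sum.inter_filter[symmetric]) simp
  also have "{i\<in>{0..j}. even i} = (\<lambda>t. 2 * t) ` {0..j div 2}" by (auto elim!: evenE)
  also have "(\<Sum>i\<in>(\<lambda>t. 2 * t) ` {0..j div 2}. Q (e * int (i div 2)) / qpoch (i div 2) * Ph n f m (j - i))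
      = (\<Sum>t=0..j div 2. Q (e * int t) / qpoch t * Ph n f m (j - 2 * t))"
    by (subst sum.reindex) (auto simp: inj_on_def)
  finally show ?thesis .
qed

lemma RHS_FF:
  assumes s: "1 \<le> s" "s \<le> n"
  shows "(\<Sum>\<gamma>\<in>Gam n m j. qpow ((\<Sum>x\<in>Bset n. \<gamma> x * (\<gamma> x - 1)) div 2 - \<gamma> (U s) * \<gamma> (Bar s) + (\<Sum>x\<in>Bset n. f x * \<gamma> x)) * qmultinom n j \<gamma>)
    = qpoch j * (RR (f (U s) + f (Bar s) - 1) * PP n f m) $ j"
proof -
  let ?c = "\<lambda>t. Q ((f (U s) + f (Bar s) - 1) * int t) / qpoch t"
  have "(\<Sum>\<gamma>\<in>Gam n m j. qpow ((\<Sum>x\<in>Bset n. \<gamma> x * (\<gamma> x - 1)) div 2 - \<gamma> (U s) * \<gamma> (Bar s) + (\<Sum>x\<in>Bset n. f x * \<gamma> x)) * qmultinom n j \<gamma>)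
     = (\<Sum>\<gamma>\<in>Gam n m j. qpoch j * (\<Sum>t=0..min (nat (\<gamma> (U s))) (nat (\<gamma> (Bar s))). ?c t * (\<Prod>x\<in>Bset n. lf f (dn s t \<gamma>) x)))"
    by (rule sum.cong[OF refl], rule per_gamma[OF s], assumption)
  also have "\<dots> = qpoch j * (\<Sum>\<gamma>\<in>Gam n m j. \<Sum>t=0..min (nat (\<gamma> (U s))) (nat (\<gamma> (Bar s))). ?c t * (\<Prod>x\<in>Bset n. lf f (dn s t \<gamma>) x))"
    by (rule sum_distrib_left[symmetric])
  also have "\<dots> = qpoch j * (\<Sum>t=0..j div 2. ?c t * Ph n f m (j - 2 * t))"
    by (simp only: RHS_sum[OF s, where c = ?c])
  also have "\<dots> = qpoch j * (RR (f (U s) + f (Bar s) - 1) * PP n f m) $ j"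
    by (simp only: FF_coeff)
  finally show ?thesis .
qed




lemma FE:
  assumes n4: "n \<ge> 4" and bB: "b \<in> Bset n"
  shows "FF n b m - sc 1 (FF n b m) = (\<Sum>c\<in>Bset n. Tm n b m c)"
proof (cases b)
  case (U k)
  then have k: "1 \<le> k" "k \<le> n" using bB by auto
  show ?thesis
  proof (cases "k = 1")
    case True then show ?thesis using U FE_U1[OF n4] by simp
  next
    case False then show ?thesis using U FE_Uk[OF n4, of k] k by simp
  qed
next
  case (Bar k)
  then have k: "1 \<le> k" "k \<le> n" using bB by auto
  show ?thesis
  proof (cases "k = n")
    case True then show ?thesis using Bar FE_Barn[OF n4] by simp
  next
    case False then show ?thesis using Bar FE_Bark[OF n4, of k] k by simp
  qed
qed

lemma FF_rec:
  assumes n4: "n \<ge> 4" and bB: "b \<in> Bset n"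
  shows "(1 - Q (int (Suc j))) * FF n b m $ Suc j = (\<Sum>c\<in>Bset n. Q (H n b c * int (Suc j)) * FF n c (m - dl c) $ j)"
  by (rule coeff_extract) (use FE[OF n4 bB] in \<open>simp add: Tm_def\<close>)

lemma muwt_wt:
  assumes n4: "n \<ge> 4" and cB: "c \<in> Bset n"
  shows "muwt n m - wt n c = muwt n (m - dl c)"
  using n4 cB by (cases c) (auto simp: muwt_def wtU_def Lam_def fun_eq_iff)

lemma Gam_0_set: "Gam n m 0 = (if \<forall>i\<in>{1..n}. m i = 0 then {\<lambda>_. 0} else {})"
proof -
  have "\<gamma> \<in> Gam n m 0 \<longleftrightarrow> \<gamma> = (\<lambda>_. 0) \<and> (\<forall>i\<in>{1..n}. m i = 0)" for \<gamma>
  proof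
    assume g: "\<gamma> \<in> Gam n m 0"
    then have z: "\<gamma> = (\<lambda>_. 0)" using Gam_0 by auto
    then show "\<gamma> = (\<lambda>_. 0) \<and> (\<forall>i\<in>{1..n}. m i = 0)" using g by (auto simp: Gam_def)
  next
    assume "\<gamma> = (\<lambda>_. 0) \<and> (\<forall>i\<in>{1..n}. m i = 0)"
    then show "\<gamma> \<in> Gam n m 0" by (auto simp: Gam_def)
  qed
  then show ?thesis by auto
qed

lemma FF_0: "FF n b m $ 0 = (if \<forall>i\<in>{1..n}. m i = 0 then 1 else 0)"
  by (simp add: FF_def RR_def PP_def Ph_def Gam_0_set lf_def)

lemma muwt_0:
  assumes n4: "n \<ge> 4"
  shows "muwt n m = 0 \<longleftrightarrow> (\<forall>i\<in>{1..n}. m i = 0)"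
proof
  assume z: "muwt n m = 0"
  have e: "\<And>k. muwt n m k = 0" using z by simp
  have a: "- m 1 - m 2 = 0" using e[of 0] by (simp add: muwt_def)
  have b: "m 1 - m 2 = 0" using e[of 1] n4 by (simp add: muwt_def eval_nat_numeral)
  have c: "m k = m (k + 1)" if "1 \<le> k" "k < n" for k
    using e[of k] that by (simp add: muwt_def)
  have d: "m (n - 1) + m n = 0" using e[of n] n4 by (simp add: muwt_def)
  have m1: "m 1 = 0" using a b by simp
  have allk: "\<forall>k. 1 \<le> k \<longrightarrow> k \<le> n \<longrightarrow> m k = m 1"
  proof (intro allI impI)
    fix k assume "1 \<le> k" "k \<le> n"
    then show "m k = m 1"
    proof (induction k rule: dec_induct)
      case base then show ?case by simp
    next
      case (step k) then show ?case using c[of k] by simp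
    qed
  qed
  show "\<forall>i\<in>{1..n}. m i = 0" using allk m1 by auto
next
  assume "\<forall>i\<in>{1..n}. m i = 0"
  then show "muwt n m = 0" using n4 by (auto simp: muwt_def fun_eq_iff)
qed

lemma main_ind:
  assumes n4: "n \<ge> 4"
  shows "\<forall>b\<in>Bset n. \<forall>m. gfun n j b (muwt n m) = qpoch j * FF n b m $ j"
proof (induction j)
  case 0
  show ?case using muwt_0[OF n4] by (auto simp: gfun_0 FF_0)
next
  case (Suc j)
  show ?case
  proof (intro ballI allI)
    fix b m assume bB: "b \<in> Bset n"
    have "gfun n (Suc j) b (muwt n m) = (\<Sum>c\<in>Bset n. Q (int (Suc j) * H n b c) * gfun n j c (muwt n m - wt n c))"
      by (rule gfun_Suc)
    also have "\<dots> = (\<Sum>c\<in>Bset n. Q (int (Suc j) * H n b c) * (qpoch j * FF n c (m - dl c) $ j))"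
    proof (rule sum.cong[OF refl])
      fix c assume c: "c \<in> Bset n"
      have "gfun n j c (muwt n m - wt n c) = qpoch j * FF n c (m - dl c) $ j"
        unfolding muwt_wt[OF n4 c] using Suc.IH c by blast
      then show "Q (int (Suc j) * H n b c) * gfun n j c (muwt n m - wt n c) = Q (int (Suc j) * H n b c) * (qpoch j * FF n c (m - dl c) $ j)"
        by (simp only:)
    qed
    also have "\<dots> = qpoch j * (\<Sum>c\<in>Bset n. Q (H n b c * int (Suc j)) * FF n c (m - dl c) $ j)"
      by (simp add: sum_distrib_left ac_simps)
    also have "\<dots> = qpoch j * ((1 - Q (int (Suc j))) * FF n b m $ Suc j)"
      by (simp only: FF_rec[OF n4 bB])
    also have "\<dots> = qpoch (Suc j) * FF n b m $ Suc j"
      by (simp add: qpoch_Suc)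
    finally show "gfun n (Suc j) b (muwt n m) = qpoch (Suc j) * FF n b m $ Suc j" .
  qed
qed

theorem mainTheorem14:
  fixes n j :: nat and b :: bel and m :: "nat \<Rightarrow> int" and s :: nat
  assumes "n \<ge> 4" and "b \<in> Bset n"
    and "s = (case b of U _ \<Rightarrow> 1 | Bar _ \<Rightarrow> n)"
  shows "gfun n j b (muwt n m) =
    (\<Sum>\<gamma>\<in>{\<gamma> :: bel \<Rightarrow> int. (\<forall>x\<in>Bset n. \<gamma> x \<ge> 0) \<and> (\<forall>x. x \<notin> Bset n \<longrightarrow> \<gamma> x = 0)
           \<and> (\<forall>i\<in>{1..n}. \<gamma> (U i) - \<gamma> (Bar i) = m i) \<and> (\<Sum>x\<in>Bset n. \<gamma> x) = int j}.
       qpow ((\<Sum>x\<in>Bset n. \<gamma> x * (\<gamma> x - 1)) div 2 - \<gamma> (U s) * \<gamma> (Bar s)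
             + (\<Sum>x\<in>Bset n. H n b x * \<gamma> x))
       * qmultinom n j \<gamma>)"
proof -
  have n4: "n \<ge> 4" and bB: "b \<in> Bset n" using assms by auto
  have ss: "s = sv n b" using assms(3) by (simp add: sv_def)
  have s1: "1 \<le> s" "s \<le> n" using n4 unfolding ss sv_def by (cases b; simp)+
  have "(\<Sum>\<gamma>\<in>{\<gamma> :: bel \<Rightarrow> int. (\<forall>x\<in>Bset n. \<gamma> x \<ge> 0) \<and> (\<forall>x. x \<notin> Bset n \<longrightarrow> \<gamma> x = 0)
           \<and> (\<forall>i\<in>{1..n}. \<gamma> (U i) - \<gamma> (Bar i) = m i) \<and> (\<Sum>x\<in>Bset n. \<gamma> x) = int j}.
       qpow ((\<Sum>x\<in>Bset n. \<gamma> x * (\<gamma> x - 1)) div 2 - \<gamma> (U s) * \<gamma> (Bar s)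
             + (\<Sum>x\<in>Bset n. H n b x * \<gamma> x))
       * qmultinom n j \<gamma>) = qpoch j * (RR (H n b (U s) + H n b (Bar s) - 1) * PP n (H n b) m) $ j"
    unfolding Gam_def[symmetric] by (rule RHS_FF[OF s1])
  also have "\<dots> = qpoch j * FF n b m $ j" by (simp add: FF_def ee_def ss)
  also have "\<dots> = gfun n j b (muwt n m)" using main_ind[OF n4] bB by simp
  finally show ?thesis by simp
qed


end
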